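(* Assume that $(s,p)$ satisfies either (i) $s>-\frac1p$, $p>1$, or (ii) $s\ge-1$, $p=1$. Then for each integer $n\ge2$, every $t\in\mathbb{R}$ and all $v,\tilde v\in\mathcal{F}L_0^{s,p}(\mathbb{T})$, $$\|\mathcal{N}^n(t)(v)\|_{\mathcal{F}L_0^{s,p}}\le C_s(n)\frac{Z_{s,p}^{n-1}}{2^{n-1}(n-1)!}\|v\|_{\mathcal{F}L_0^{s,p}}^n$$ and $$\|\mathcal{N}^n(t)(v)-\mathcal{N}^n(t)(\tilde v)\|_{\mathcal{F}L_0^{s,p}}\le C_s(n)\frac{nZ_{s,p}^{n-1}}{2^{n-1}(n-1)!}\big(\|v\|_{\mathcal{F}L_0^{s,p}}+\|\tilde v\|_{\mathcal{F}L_0^{s,p}}\big)^{n-1}\|v-\tilde v\|_{\mathcal{F}L_0^{s,p}},$$ where $C_s(n)=1$ if $s\le0$ and $C_s(n)=n^s$ if $s>0$.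
   Context: For $f$ on $\mathbb{T}=\mathbb{R}/(2\pi\mathbb{Z})$, $f_k=\frac1{2\pi}\int_{\mathbb{T}}f(x)e^{-ikx}dx$; $\mathbb{Z}_0=\mathbb{Z}\setminus\{0\}$; $\mathcal{F}L_0^{s,p}(\mathbb{T})$ is the space of mean-zero functions with norm $\||k|^sf_k\|_{\ell^p(\mathbb{Z}_0)}$. For $s>-\frac1p$, $p\ge1$, $Z_{s,p}=\||k|^{-(s+1)}\|_{\ell^{p'}(\mathbb{Z}_0)}=[2\zeta((s+1)p')]^{1/p'}$ with $\frac1p+\frac1{p'}=1$ and $\zeta$ the Riemann zeta function; for $p=1$ and $s\ge-1$, $Z_{s,1}=1$. For ${\bf k}=(k_1,\dots,k_n)\in\mathbb{Z}_0^n$ let $|{\bf k}|_n=\sum k_j$ and $\Phi_n({\bf k})=\sum_{1\le i<j\le n}2k_ik_j$. For mean-zero $w$, $\mathcal{N}^n(t)(w)$ is the mean-zero function with Fourier coefficients $\mathcal{N}^n_k(t)(w)=\frac{(-1)^nk}{2^{n-1}n!}\sum_{{\bf k}\in\mathbb{Z}_0^n,\,|{\bf k}|_n=k}e^{i\Phi_n({\bf k})t}\prod_{j=1}^n\frac{w_{k_j}}{k_j}$, $k\in\mathbb{Z}_0$. *)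

theory Defs
  imports "HOL-Analysis.Analysis"
begin

text \<open>Mean-zero (generalised) functions on the torus are represented by their
Fourier coefficient sequences w :: int => complex, with w 0 = 0.\<close>

definition Zset :: "int set" where
  "Zset = {k. k \<noteq> 0}"

definition in_FL0 :: "real \<Rightarrow> real \<Rightarrow> (int \<Rightarrow> complex) \<Rightarrow> bool" where
  "in_FL0 s p w \<longleftrightarrow> w 0 = 0 \<and>
     (\<lambda>k. (\<bar>real_of_int k\<bar> powr s * cmod (w k)) powr p) summable_on Zset"

definition FL_norm :: "real \<Rightarrow> real \<Rightarrow> (int \<Rightarrow> complex) \<Rightarrow> real" where
  "FL_norm s p w =
     (\<Sum>\<^sub>\<infinity>k\<in>Zset. (\<bar>real_of_int k\<bar> powr s * cmod (w k)) powr p) powr (1 / p)"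

text \<open>Z_{s,p} = || |k|^{-(s+1)} ||_{l^{p'}(Z_0)}, with p' the dual exponent;
for p = 1 (p' = infinity) this is the sup norm, equal to 1.\<close>
definition Zsp :: "real \<Rightarrow> real \<Rightarrow> real" where
  "Zsp s p = (if p = 1 then (SUP k\<in>Zset. \<bar>real_of_int k\<bar> powr (-(s+1)))
     else (let q = p / (p - 1) in
       (\<Sum>\<^sub>\<infinity>k\<in>Zset. (\<bar>real_of_int k\<bar> powr (-(s+1))) powr q) powr (1 / q)))"

definition Cs :: "real \<Rightarrow> nat \<Rightarrow> real" where
  "Cs s n = (if s \<le> 0 then 1 else real n powr s)"

definition tuples :: "nat \<Rightarrow> int \<Rightarrow> int list set" where
  "tuples n k = {ks. length ks = n \<and> (\<forall>j\<in>set ks. j \<noteq> 0) \<and> sum_list ks = k}"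

definition Phi :: "int list \<Rightarrow> int" where
  "Phi ks = (\<Sum>i<length ks. \<Sum>j<length ks. if i < j then 2 * ks ! i * ks ! j else 0)"

definition NN :: "nat \<Rightarrow> real \<Rightarrow> (int \<Rightarrow> complex) \<Rightarrow> int \<Rightarrow> complex" where
  "NN n t w k = (if k = 0 then 0 else
     ((-1) ^ n * of_int k / (2 ^ (n - 1) * fact n)) *
     (\<Sum>\<^sub>\<infinity>ks\<in>tuples n k. exp (\<i> * of_real (of_int (Phi ks) * t)) *
        (\<Prod>j<n. w (ks ! j) / of_int (ks ! j))))"

end

theory Submission
  imports Defs
begin

lemma tangent_ineq:
  fixes e mu q :: real
  assumes "e \<ge> 0" "mu > 0" "q \<ge> 1"
  shows "e * mu powr (q - 1) \<le> e powr q / q + (1 - 1/q) * mu powr q"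
proof (cases "e = 0")
  case True
  then show ?thesis using assms by simp
next
  case False
  then have ep: "e > 0" using assms by simp
  have "(e powr q) powr (1/q) * (mu powr q) powr (1 - 1/q) \<le> (1/q) * e powr q + (1 - 1/q) * mu powr q"
    by (rule Youngs_inequality_0) (use assms ep in auto)
  moreover have "(e powr q) powr (1/q) = e" using assms ep by (simp add: powr_powr)
  moreover have "(mu powr q) powr (1 - 1/q) = mu powr (q - 1)" using assms
    by (simp add: powr_powr algebra_simps)
  ultimately show ?thesis by simp
qed

lemma infsum_sum_fin:
  fixes f :: "'i \<Rightarrow> 'a \<Rightarrow> real"
  assumes "finite I" "\<And>i. i \<in> I \<Longrightarrow> f i summable_on A"
  shows "(\<lambda>x. \<Sum>i\<in>I. f i x) summable_on A \<and> infsum (\<lambda>x. \<Sum>i\<in>I. f i x) A = (\<Sum>i\<in>I. infsum (f i) A)"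
  using assms
proof (induction I rule: finite_induct)
  case empty
  then show ?case by simp
next
  case (insert a F)
  then have h: "(\<lambda>x. \<Sum>i\<in>F. f i x) summable_on A" "infsum (\<lambda>x. \<Sum>i\<in>F. f i x) A = (\<Sum>i\<in>F. infsum (f i) A)"
    by auto
  have fa: "f a summable_on A" using insert by auto
  show ?case using insert.hyps h fa
    by (simp add: summable_on_add infsum_add)
qed

lemma jensen_infsum:
  fixes e w :: "'a \<Rightarrow> real" and q :: real
  assumes q: "q \<ge> 1" and e0: "\<And>x. x \<in> X \<Longrightarrow> e x \<ge> 0" and w0: "\<And>x. x \<in> X \<Longrightarrow> w x \<ge> 0"
    and ws: "w summable_on X" and ews: "(\<lambda>x. e x powr q * w x) summable_on X"
  shows "(\<lambda>x. e x * w x) summable_on X"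
    "(\<Sum>\<^sub>\<infinity>x\<in>X. e x * w x) powr q \<le> (\<Sum>\<^sub>\<infinity>x\<in>X. w x) powr (q - 1) * (\<Sum>\<^sub>\<infinity>x\<in>X. e x powr q * w x)"
proof -
  have pt: "e x * w x \<le> e x powr q * w x + w x" if "x \<in> X" for x
  proof -
    have "e x \<le> e x powr q + 1"
    proof (cases "e x \<le> 1")
      case True then show ?thesis by (smt (verit) powr_ge_zero)
    next
      case False
      then have "e x powr 1 \<le> e x powr q" using q by (intro powr_mono) auto
      then show ?thesis using False by simp
    qed
    then show ?thesis using w0[OF that] by (metis distrib_right mult_1 mult_right_mono)
  qed
  show es: "(\<lambda>x. e x * w x) summable_on X"
    by (rule summable_on_comparison_test[OF summable_on_add[OF ews ws]]) (use pt e0 w0 in auto)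
  define S where "S = (\<Sum>\<^sub>\<infinity>x\<in>X. e x * w x)"
  define A where "A = (\<Sum>\<^sub>\<infinity>x\<in>X. e x powr q * w x)"
  define B where "B = (\<Sum>\<^sub>\<infinity>x\<in>X. w x)"
  have S0: "S \<ge> 0" unfolding S_def by (rule infsum_nonneg) (use e0 w0 in auto)
  have A0: "A \<ge> 0" unfolding A_def by (rule infsum_nonneg) (use e0 w0 in auto)
  have B0: "B \<ge> 0" unfolding B_def by (rule infsum_nonneg) (use e0 w0 in auto)
  show "S powr q \<le> B powr (q - 1) * A"
  proof (cases "B = 0 \<or> A = 0")
    case True
    have "e x * w x = 0" if "x \<in> X" for x
    proof (cases "B = 0")
      case True
      have "w x = 0" using nonneg_infsum_le_0D[of w X x] True ws w0 that unfolding B_def by auto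
      then show ?thesis by simp
    next
      case False
      then have "A = 0" using \<open>B = 0 \<or> A = 0\<close> by simp
      then have "e x powr q * w x = 0" using nonneg_infsum_le_0D[of "\<lambda>x. e x powr q * w x" X x] ews e0 w0 that
        unfolding A_def by auto
      then show ?thesis using q by auto
    qed
    then have "S = 0" unfolding S_def by (simp add: infsum_0)
    then show ?thesis using A0 B0 by simp
  next
    case False
    then have Ap: "A > 0" and Bp: "B > 0" using A0 B0 by auto
    define r where "r = A / B"
    have rp: "r > 0" using Ap Bp by (simp add: r_def)
    define mu where "mu = r powr (1/q)"
    have mup: "mu > 0" using rp by (simp add: mu_def)
    have muq: "mu powr q = r" using rp q by (simp add: mu_def powr_powr)
    have pt2: "e x * w x * mu powr (q - 1) \<le> e x powr q * w x / q + (1 - 1/q) * r * w x" if "x \<in> X" for x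
    proof -
      have "e x * mu powr (q - 1) \<le> e x powr q / q + (1 - 1/q) * mu powr q"
        by (rule tangent_ineq) (use e0[OF that] mup q in auto)
      then have "e x * mu powr (q - 1) * w x \<le> (e x powr q / q + (1 - 1/q) * mu powr q) * w x"
        using w0[OF that] by (rule mult_right_mono)
        then show ?thesis using muq by (simp add: algebra_simps)
    qed
    have sA: "(\<lambda>x. e x powr q * w x / q) summable_on X" using summable_on_cmult_left[OF ews, of "1/q"] by simp
    have sB: "(\<lambda>x. (1 - 1/q) * r * w x) summable_on X" using summable_on_cmult_right[OF ws, of "(1 - 1/q) * r"]
      by (simp add: mult.assoc)
    have sC: "(\<lambda>x. e x * w x * mu powr (q - 1)) summable_on X" using summable_on_cmult_left[OF es] by simp
    have "S * mu powr (q - 1) = (\<Sum>\<^sub>\<infinity>x\<in>X. e x * w x * mu powr (q - 1))"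
      unfolding S_def by (simp add: infsum_cmult_left')
    also have "\<dots> \<le> (\<Sum>\<^sub>\<infinity>x\<in>X. e x powr q * w x / q + (1 - 1/q) * r * w x)"
      by (rule infsum_mono) (use pt2 sA sB sC in \<open>auto intro!: summable_on_add\<close>)
    also have "\<dots> = A / q + (1 - 1/q) * r * B"
    proof -
      have "(\<Sum>\<^sub>\<infinity>x\<in>X. e x powr q * w x / q + (1 - 1/q) * r * w x) = (\<Sum>\<^sub>\<infinity>x\<in>X. e x powr q * w x / q) + (\<Sum>\<^sub>\<infinity>x\<in>X. (1 - 1/q) * r * w x)"
        by (rule infsum_add[OF sA sB])
      also have "\<dots> = A / q + (1 - 1/q) * r * B" unfolding A_def B_def
        using infsum_cmult_left'[of "\<lambda>x. e x powr q * w x" "1/q" X] infsum_cmult_right'[of "(1 - 1/q) * r" w X]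
        by (simp add: mult.assoc)
      finally show ?thesis .
    qed
    also have "\<dots> = A" using Bp q by (simp add: r_def field_simps)
    finally have Sle: "S * mu powr (q - 1) \<le> A" .
    have mq: "mu powr (q - 1) > 0" using mup by simp
    have "S \<le> A / mu powr (q - 1)" using Sle mq by (simp add: field_simps)
    then have "S powr q \<le> (A / mu powr (q - 1)) powr q" using S0 q by (intro powr_mono2) auto
    also have "\<dots> = A powr q / r powr (q - 1)"
    proof -
      have "(A / mu powr (q - 1)) powr q = A powr q / (mu powr (q - 1)) powr q"
        using Ap mup by (simp add: powr_divide)
      also have "(mu powr (q - 1)) powr q = (mu powr q) powr (q - 1)"
        by (simp add: powr_powr mult.commute)
      finally show ?thesis using muq by simp
    qed
    also have "\<dots> = B powr (q - 1) * A"
    proof -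
      have "A powr q = A * A powr (q - 1)" using Ap by (simp add: powr_mult_base)
      then show ?thesis using Ap Bp q by (simp add: r_def powr_divide field_simps)
    qed
    finally show ?thesis unfolding S_def A_def B_def .
  qed
qed

lemma jensen_sum:
  fixes e w :: "'a \<Rightarrow> real" and q :: real
  assumes q: "q \<ge> 1" and fin: "finite X" and e0: "\<And>x. x \<in> X \<Longrightarrow> e x \<ge> 0" and w0: "\<And>x. x \<in> X \<Longrightarrow> w x \<ge> 0"
  shows "(\<Sum>x\<in>X. e x * w x) powr q \<le> (\<Sum>x\<in>X. w x) powr (q - 1) * (\<Sum>x\<in>X. e x powr q * w x)"
  using jensen_infsum(2)[of q X e w] assms by simp

lemma minkowski_fin:
  fixes T :: "'i \<Rightarrow> 'a \<Rightarrow> real" and N :: "'i \<Rightarrow> real"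
  assumes p: "p \<ge> 1" and fin: "finite I"
    and T0: "\<And>i k. i \<in> I \<Longrightarrow> k \<in> K \<Longrightarrow> T i k \<ge> 0" and N0: "\<And>i. i \<in> I \<Longrightarrow> N i \<ge> 0"
    and Ts: "\<And>i. i \<in> I \<Longrightarrow> (\<lambda>k. T i k powr p) summable_on K"
    and Tb: "\<And>i. i \<in> I \<Longrightarrow> (\<Sum>\<^sub>\<infinity>k\<in>K. T i k powr p) \<le> N i powr p"
  shows "(\<lambda>k. (\<Sum>i\<in>I. T i k) powr p) summable_on K \<and>
         (\<Sum>\<^sub>\<infinity>k\<in>K. (\<Sum>i\<in>I. T i k) powr p) \<le> (\<Sum>i\<in>I. N i) powr p"
proof -
  define J where "J = {i\<in>I. N i > 0}"
  have finJ: "finite J" using fin by (simp add: J_def)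
  have JI: "J \<subseteq> I" by (auto simp: J_def)
  have Tz: "T i k = 0" if "i \<in> I - J" "k \<in> K" for i k
  proof -
    have "N i = 0" using that N0 by (force simp: J_def)
    then have "(\<Sum>\<^sub>\<infinity>k\<in>K. T i k powr p) \<le> 0" using Tb[of i] that p by simp
    then have "T i k powr p = 0" using nonneg_infsum_le_0D[of "\<lambda>k. T i k powr p" K k] Ts[of i] that by auto
    then show ?thesis by simp
  qed
  have sumIJ: "(\<Sum>i\<in>I. T i k) = (\<Sum>i\<in>J. T i k)" if "k \<in> K" for k
    using Tz[OF _ that] fin JI by (intro sum.mono_neutral_right) auto
  have NIJ: "(\<Sum>i\<in>I. N i) = (\<Sum>i\<in>J. N i)"
    using fin JI by (intro sum.mono_neutral_right) (auto simp: J_def dest: N0)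
  show ?thesis
  proof (cases "J = {}")
    case True
    then have "(\<Sum>i\<in>I. T i k) powr p = 0" if "k \<in> K" for k using sumIJ[OF that] by simp
    then have e: "(\<lambda>k. (\<Sum>i\<in>I. T i k) powr p) summable_on K \<and> (\<Sum>\<^sub>\<infinity>k\<in>K. (\<Sum>i\<in>I. T i k) powr p) = 0"
      by (metis (mono_tags, lifting) infsum_0 summable_on_0)
    show ?thesis using e by simp
  next
    case False
    define Nt where "Nt = (\<Sum>i\<in>J. N i)"
    have Ntp: "Nt > 0" unfolding Nt_def using False finJ by (intro sum_pos) (auto simp: J_def)
    define G where "G k = Nt powr (p - 1) * (\<Sum>i\<in>J. T i k powr p * N i powr (1 - p))" for k
    have pt: "(\<Sum>i\<in>I. T i k) powr p \<le> G k" if "k \<in> K" for k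
    proof -
      have "(\<Sum>i\<in>J. T i k) = (\<Sum>i\<in>J. (T i k / N i) * N i)"
        by (intro sum.cong) (auto simp: J_def)
      moreover have "(\<Sum>i\<in>J. (T i k / N i) * N i) powr p \<le> Nt powr (p - 1) * (\<Sum>i\<in>J. (T i k / N i) powr p * N i)"
        unfolding Nt_def by (rule jensen_sum) (use p finJ that T0 JI in \<open>auto simp: J_def\<close>)
      moreover have "(T i k / N i) powr p * N i = T i k powr p * N i powr (1 - p)" if "i \<in> J" for i
      proof -
        have Np: "N i > 0" using that by (simp add: J_def)
        have "N i powr (1 - p) = N i / N i powr p" using Np by (simp add: powr_diff)
        then show ?thesis using Np T0[of i k] \<open>k \<in> K\<close> JI that by (auto simp: powr_divide)
      qed
      ultimately show ?thesis using sumIJ[OF that] unfolding G_def by simp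
    qed
    have sG: "G summable_on K \<and> infsum G K = Nt powr (p - 1) * (\<Sum>i\<in>J. (\<Sum>\<^sub>\<infinity>k\<in>K. T i k powr p) * N i powr (1 - p))"
    proof -
      have "(\<lambda>k. \<Sum>i\<in>J. T i k powr p * N i powr (1 - p)) summable_on K \<and>
        infsum (\<lambda>k. \<Sum>i\<in>J. T i k powr p * N i powr (1 - p)) K = (\<Sum>i\<in>J. infsum (\<lambda>k. T i k powr p * N i powr (1 - p)) K)"
        by (rule infsum_sum_fin) (use finJ JI Ts in \<open>auto intro!: summable_on_cmult_left\<close>)
      then show ?thesis unfolding G_def
        by (simp add: summable_on_cmult_right infsum_cmult_right' infsum_cmult_left')
    qed
    have summ: "(\<lambda>k. (\<Sum>i\<in>I. T i k) powr p) summable_on K"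
      by (rule summable_on_comparison_test[of G]) (use sG pt in auto)
    have "(\<Sum>\<^sub>\<infinity>k\<in>K. (\<Sum>i\<in>I. T i k) powr p) \<le> infsum G K"
      by (rule infsum_mono) (use summ sG pt in auto)
    also have "\<dots> \<le> Nt powr (p - 1) * (\<Sum>i\<in>J. N i powr p * N i powr (1 - p))"
      using sG by (auto intro!: mult_left_mono sum_mono mult_right_mono Tb dest: subsetD[OF JI])
    also have "\<dots> = Nt powr (p - 1) * Nt"
      unfolding Nt_def by (intro arg_cong[where f="\<lambda>x. _ * x"] sum.cong) (auto simp: J_def powr_add[symmetric])
    also have "\<dots> = Nt powr p" using Ntp by (simp add: powr_diff)
    finally show ?thesis using summ NIJ Nt_def by simp
  qed
qed

lemma prod_PiE_nonneg:
  fixes f :: "'i \<Rightarrow> 'b \<Rightarrow> real"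
  assumes fin: "finite A" and f0: "\<And>x y. x \<in> A \<Longrightarrow> y \<in> B x \<Longrightarrow> f x y \<ge> 0"
    and fs: "\<And>x. x \<in> A \<Longrightarrow> f x summable_on B x"
  shows "(\<lambda>g. \<Prod>x\<in>A. f x (g x)) summable_on PiE A B \<and>
         infsum (\<lambda>g. \<Prod>x\<in>A. f x (g x)) (PiE A B) = (\<Prod>x\<in>A. infsum (f x) (B x))"
proof
  have bnd: "(\<Sum>p\<in>P. \<Prod>x\<in>A. f x (p x)) \<le> (\<Prod>x\<in>A. infsum (f x) (B x))"
    if P: "P \<subseteq> PiE A B" "finite P" for P
  proof -
    define B' where "B' x = {p x| p. p\<in>P}" for x
    have fin_B': "finite (B' x)" for x using that by (auto simp: B'_def)
    have finPi: "finite (PiE A B')" using fin fin_B' by (simp add: finite_PiE)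
    have PB': "P \<subseteq> PiE A B'" using P by (auto simp: B'_def PiE_def Pi_def extensional_def)
    have B'B: "B' x \<subseteq> B x" if "x \<in> A" for x using P that by (auto simp: B'_def)
    have "(\<Sum>p\<in>P. \<Prod>x\<in>A. f x (p x)) \<le> (\<Sum>p\<in>PiE A B'. \<Prod>x\<in>A. f x (p x))"
      using B'B f0 by (intro sum_mono2[OF finPi PB']) (force intro!: prod_nonneg simp: PiE_def Pi_def)
    also have "\<dots> = (\<Prod>x\<in>A. \<Sum>y\<in>B' x. f x y)"
      by (rule prod_sum_PiE[symmetric]) (use fin fin_B' in auto)
    also have "\<dots> \<le> (\<Prod>x\<in>A. infsum (f x) (B x))"
      by (intro prod_mono conjI sum_nonneg finite_sum_le_infsum fs fin_B' B'B)
         (use f0 B'B in auto)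
    finally show ?thesis .
  qed
  show "(\<lambda>g. \<Prod>x\<in>A. f x (g x)) summable_on PiE A B"
    by (rule nonneg_bdd_above_summable_on)
       (use f0 bnd in \<open>auto intro!: prod_nonneg simp: PiE_def Pi_def bdd_above_def, blast\<close>)
  have "(\<lambda>y. norm (f x y)) summable_on B x" if "x \<in> A" for x
    using fs[OF that] by (rule summable_on_cong[THEN iffD1, rotated]) (use f0 that in auto)
  then show "infsum (\<lambda>g. \<Prod>x\<in>A. f x (g x)) (PiE A B) = (\<Prod>x\<in>A. infsum (f x) (B x))"
    by (intro infsum_prod_PiE_abs fin) auto
qed

definition Pn :: "nat \<Rightarrow> (nat \<Rightarrow> int) set" where
  "Pn n = PiE {..<n} (\<lambda>_. Zset)"

definition Pk :: "nat \<Rightarrow> int \<Rightarrow> (nat \<Rightarrow> int) set" where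
  "Pk n k = {g \<in> Pn n. (\<Sum>i<n. g i) = k}"

lemma Pk_sub: "Pk n k \<subseteq> Pn n" by (auto simp: Pk_def)

lemma sum_over_Pk:
  fixes V :: "(nat \<Rightarrow> int) \<Rightarrow> real"
  assumes V0: "\<And>g. g \<in> Pn n \<Longrightarrow> V g \<ge> 0" and Vs: "V summable_on Pn n"
  shows "((\<lambda>k. \<Sum>\<^sub>\<infinity>g\<in>Pk n k. V g) has_sum (\<Sum>\<^sub>\<infinity>g\<in>Pn n. V g)) UNIV"
proof -
  define h where "h g = ((\<Sum>i<n. g i), g)" for g :: "nat \<Rightarrow> int"
  have inj: "inj_on h (Pn n)" by (auto simp: h_def inj_on_def)
  have img: "h ` Pn n = Sigma UNIV (Pk n)" by (auto simp: h_def Pk_def image_def)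
  have "((\<lambda>(k,g). V g) \<circ> h) summable_on Pn n" using Vs by (simp add: h_def o_def)
  then have "(\<lambda>(k,g). V g) summable_on Sigma UNIV (Pk n)"
    using summable_on_reindex[OF inj, of "\<lambda>(k,g). V g"] img by metis
  moreover have "infsum (\<lambda>(k,g). V g) (Sigma UNIV (Pk n)) = (\<Sum>\<^sub>\<infinity>g\<in>Pn n. V g)"
    using infsum_reindex[OF inj, of "\<lambda>(k,g). V g"] img by (simp add: h_def o_def)
  ultimately have hs: "((\<lambda>(k,g). V g) has_sum (\<Sum>\<^sub>\<infinity>g\<in>Pn n. V g)) (Sigma UNIV (Pk n))"
    by (metis has_sum_infsum)
  show ?thesis
  proof (rule has_sum_SigmaD[OF hs])
    fix k :: int
    have "V summable_on Pk n k" by (rule summable_on_subset_banach[OF Vs Pk_sub])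
    then show "((\<lambda>g. case (k, g) of (k, g) \<Rightarrow> V g) has_sum (\<Sum>\<^sub>\<infinity>g\<in>Pk n k. V g)) (Pk n k)"
      by (simp add: has_sum_infsum)
  qed
qed

lemma young:
  fixes e :: "int \<Rightarrow> real" and c :: "nat \<Rightarrow> int \<Rightarrow> real" and p :: real
  assumes p: "p \<ge> 1" and i: "i < n"
    and e0: "\<And>x. e x \<ge> 0" and c0: "\<And>j x. c j x \<ge> 0"
    and es: "(\<lambda>x. e x powr p) summable_on Zset"
    and cs: "\<And>j. j < n \<Longrightarrow> j \<noteq> i \<Longrightarrow> c j summable_on Zset"
  shows "(\<lambda>g. e (g i) * (\<Prod>j\<in>{..<n}-{i}. c j (g j))) summable_on Pk n k"
    and "(\<lambda>k. (\<Sum>\<^sub>\<infinity>g\<in>Pk n k. e (g i) * (\<Prod>j\<in>{..<n}-{i}. c j (g j))) powr p) summable_on UNIV"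
    and "(\<Sum>\<^sub>\<infinity>k. (\<Sum>\<^sub>\<infinity>g\<in>Pk n k. e (g i) * (\<Prod>j\<in>{..<n}-{i}. c j (g j))) powr p)
          \<le> (\<Sum>\<^sub>\<infinity>x\<in>Zset. e x powr p) * (\<Prod>j\<in>{..<n}-{i}. infsum (c j) Zset) powr p"
proof -
  define I' where "I' = {..<n} - {i}"
  define W where "W g = (\<Prod>j\<in>I'. c j (g j))" for g :: "nat \<Rightarrow> int"
  define PI where "PI = (\<Prod>j\<in>I'. infsum (c j) Zset)"
  define Ep where "Ep = (\<Sum>\<^sub>\<infinity>x\<in>Zset. e x powr p)"
  define r where "r g = restrict g I'" for g :: "nat \<Rightarrow> int"
  have W0: "W g \<ge> 0" for g unfolding W_def by (intro prod_nonneg) (auto intro: c0)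
  have PI0: "PI \<ge> 0" unfolding PI_def by (intro prod_nonneg infsum_nonneg) (auto intro: c0)
  have F: "W summable_on PiE I' (\<lambda>_. Zset) \<and> infsum W (PiE I' (\<lambda>_. Zset)) = PI"
    unfolding W_def PI_def by (rule prod_PiE_nonneg) (auto simp: I'_def c0 cs)
  have Wsk: "W summable_on Pk n k \<and> infsum W (Pk n k) \<le> PI" for k
  proof -
    have inj: "inj_on r (Pk n k)"
    proof (rule inj_onI)
      fix g g' assume g: "g \<in> Pk n k" and g': "g' \<in> Pk n k" and eq: "r g = r g'"
      have a: "g j = g' j" if "j \<in> I'" for j using fun_cong[OF eq, of j] that by (simp add: r_def)
      have "(\<Sum>j<n. g j) = g i + (\<Sum>j\<in>I'. g j)" "(\<Sum>j<n. g' j) = g' i + (\<Sum>j\<in>I'. g' j)"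
        using i by (simp_all add: I'_def sum.remove)
      moreover have "(\<Sum>j\<in>I'. g j) = (\<Sum>j\<in>I'. g' j)" using a by simp
      ultimately have "g i = g' i" using g g' by (simp add: Pk_def)
      then have "g j = g' j" if "j < n" for j using a that by (cases "j = i") (auto simp: I'_def)
      moreover have "g j = g' j" if "\<not> j < n" for j using g g' that
        by (auto simp: Pk_def Pn_def PiE_def extensional_def)
      ultimately show "g = g'" by (metis ext)
    qed
    have sub: "r ` Pk n k \<subseteq> PiE I' (\<lambda>_. Zset)"
      by (auto simp: r_def Pk_def Pn_def I'_def PiE_def Pi_def)
    have Weq: "W g = W (r g)" for g unfolding W_def r_def by (intro prod.cong) auto
    have s1: "W summable_on r ` Pk n k" using F sub by (meson summable_on_subset_banach)
    then have "(W \<circ> r) summable_on Pk n k" using summable_on_reindex[OF inj] by blast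
    then have s2: "W summable_on Pk n k" by (simp add: o_def Weq[symmetric])
    have "infsum W (Pk n k) = infsum (W \<circ> r) (Pk n k)" by (simp add: o_def Weq[symmetric])
    also have "\<dots> = infsum W (r ` Pk n k)" by (rule infsum_reindex[OF inj, symmetric])
    also have "\<dots> \<le> infsum W (PiE I' (\<lambda>_. Zset))"
      by (rule infsum_mono2) (use s1 F sub W0 in auto)
    finally show ?thesis using s2 F by simp
  qed
  define V where "V g = e (g i) powr p * W g" for g
  have V0: "V g \<ge> 0" for g by (simp add: V_def W0)
  have Vall: "V summable_on Pn n \<and> infsum V (Pn n) = Ep * PI"
  proof -
    define f where "f j x = (if j = i then e x powr p else c j x)" for j x
    have fj: "f j = (if j = i then (\<lambda>x. e x powr p) else c j)" for j by (auto simp: f_def fun_eq_iff)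
    have "(\<lambda>g. \<Prod>j\<in>{..<n}. f j (g j)) summable_on PiE {..<n} (\<lambda>_. Zset) \<and>
          infsum (\<lambda>g. \<Prod>j\<in>{..<n}. f j (g j)) (PiE {..<n} (\<lambda>_. Zset)) = (\<Prod>j\<in>{..<n}. infsum (f j) Zset)"
    proof (rule prod_PiE_nonneg)
      fix j assume "j \<in> {..<n}"
      have "f j = (if j = i then (\<lambda>x. e x powr p) else c j)" by (auto simp: f_def fun_eq_iff)
      then show "f j summable_on Zset" using es cs[of j] \<open>j \<in> {..<n}\<close> by (cases "j = i") auto
    qed (auto simp: f_def c0 e0)
    moreover have "(\<lambda>g. \<Prod>j\<in>{..<n}. f j (g j)) = V"
    proof
      fix g
      have "(\<Prod>j\<in>{..<n}. f j (g j)) = f i (g i) * (\<Prod>j\<in>I'. f j (g j))"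
        using i by (simp add: I'_def prod.remove)
      also have "(\<Prod>j\<in>I'. f j (g j)) = W g" unfolding W_def by (intro prod.cong) (auto simp: f_def I'_def)
      finally show "(\<Prod>j\<in>{..<n}. f j (g j)) = V g" by (simp add: V_def f_def)
    qed
    moreover have "(\<Prod>j\<in>{..<n}. infsum (f j) Zset) = Ep * PI"
    proof -
      have "(\<Prod>j\<in>{..<n}. infsum (f j) Zset) = infsum (f i) Zset * (\<Prod>j\<in>I'. infsum (f j) Zset)"
        using i by (simp add: I'_def prod.remove)
      also have "(\<Prod>j\<in>I'. infsum (f j) Zset) = PI" unfolding PI_def
        by (intro prod.cong) (auto simp: fj I'_def)
      finally show ?thesis by (simp add: Ep_def fj)
    qed
    ultimately show ?thesis by (simp add: Pn_def)
  qed
  define T where "T k = (\<Sum>\<^sub>\<infinity>g\<in>Pk n k. e (g i) * W g)" for k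
  define U where "U k = (\<Sum>\<^sub>\<infinity>g\<in>Pk n k. V g)" for k
  have jen: "(\<lambda>g. e (g i) * W g) summable_on Pk n k \<and> T k powr p \<le> PI powr (p - 1) * U k" for k
  proof -
    have Vs: "(\<lambda>g. e (g i) powr p * W g) summable_on Pk n k"
      using summable_on_subset_banach[OF conjunct1[OF Vall] Pk_sub] unfolding V_def[abs_def] by simp
    have j1: "(\<lambda>g. e (g i) * W g) summable_on Pk n k"
      by (rule jensen_infsum(1)[of p]) (use p e0 W0 Wsk Vs in auto)
    have "T k powr p \<le> (infsum W (Pk n k)) powr (p - 1) * U k"
      unfolding T_def U_def V_def by (rule jensen_infsum(2)[of p]) (use p e0 W0 Wsk Vs in auto)
    also have "\<dots> \<le> PI powr (p - 1) * U k"
    proof (rule mult_right_mono)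
      show "infsum W (Pk n k) powr (p - 1) \<le> PI powr (p - 1)"
        by (rule powr_mono2) (use p Wsk infsum_nonneg[of "Pk n k" W] W0 in auto)
      show "0 \<le> U k" unfolding U_def by (rule infsum_nonneg) (simp add: V0)
    qed
    finally show ?thesis using j1 by simp
  qed
  have Uh: "(U has_sum (Ep * PI)) UNIV"
    unfolding U_def using sum_over_Pk[of n V] Vall V0 by simp
  have T0: "T k \<ge> 0" for k unfolding T_def by (rule infsum_nonneg) (simp add: W0 e0)
  have Ts: "(\<lambda>k. T k powr p) summable_on UNIV"
    by (rule summable_on_comparison_test[of "\<lambda>k. PI powr (p - 1) * U k"])
       (use Uh jen in \<open>auto intro!: summable_on_cmult_right simp: has_sum_imp_summable\<close>)
  have "(\<Sum>\<^sub>\<infinity>k. T k powr p) \<le> (\<Sum>\<^sub>\<infinity>k. PI powr (p - 1) * U k)"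
    by (rule infsum_mono) (use Ts Uh jen in \<open>auto intro!: summable_on_cmult_right simp: has_sum_imp_summable\<close>)
  also have "\<dots> = PI powr (p - 1) * (Ep * PI)"
    using Uh by (simp add: infsum_cmult_right' infsumI)
  also have "\<dots> = Ep * PI powr p"
  proof (cases "PI = 0")
    case True then show ?thesis by simp
  next
    case False then show ?thesis using PI0 by (simp add: powr_diff field_simps)
  qed
  finally have fin: "(\<Sum>\<^sub>\<infinity>k. T k powr p) \<le> Ep * PI powr p" .
  show "(\<lambda>g. e (g i) * (\<Prod>j\<in>{..<n}-{i}. c j (g j))) summable_on Pk n k"
    using jen[of k] by (simp add: W_def I'_def)
  show "(\<lambda>k. (\<Sum>\<^sub>\<infinity>g\<in>Pk n k. e (g i) * (\<Prod>j\<in>{..<n}-{i}. c j (g j))) powr p) summable_on UNIV"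
    using Ts by (simp add: T_def W_def I'_def)
  show "(\<Sum>\<^sub>\<infinity>k. (\<Sum>\<^sub>\<infinity>g\<in>Pk n k. e (g i) * (\<Prod>j\<in>{..<n}-{i}. c j (g j))) powr p)
          \<le> (\<Sum>\<^sub>\<infinity>x\<in>Zset. e x powr p) * (\<Prod>j\<in>{..<n}-{i}. infsum (c j) Zset) powr p"
    using fin by (simp add: T_def W_def I'_def Ep_def PI_def)
qed

lemma weight_bound:
  fixes s K :: real and n :: nat and x :: "nat \<Rightarrow> real"
  assumes s: "s \<ge> -1" and n: "n \<ge> 1" and xp: "\<And>i. i < n \<Longrightarrow> x i > 0"
    and K: "K \<le> (\<Sum>i<n. x i)" "K > 0"
  shows "K powr (s+1) \<le> Cs s n * (\<Sum>i<n. x i powr (s+1))"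
proof -
  define S where "S = (\<Sum>i<n. x i)"
  have Sp: "S > 0" using K by (simp add: S_def)
  have "K powr (s+1) \<le> S powr (s+1)" using K s by (intro powr_mono2) (auto simp: S_def)
  also have "\<dots> \<le> Cs s n * (\<Sum>i<n. x i powr (s+1))"
  proof (cases "s \<le> 0")
    case True
    have "S powr (s+1) * (\<Sum>i<n. x i / S) \<le> S powr (s+1) * (\<Sum>i<n. (x i / S) powr (s+1))"
    proof (intro mult_left_mono sum_mono)
      fix i assume "i \<in> {..<n}"
      then have xi: "x i > 0" "x i \<le> S" using xp unfolding S_def
        by (auto intro!: member_le_sum intro: less_imp_le)
      have "(x i / S) powr 1 \<le> (x i / S) powr (s+1)"
        by (rule powr_mono') (use True s xi Sp in auto)
      then show "x i / S \<le> (x i / S) powr (s+1)" using xi Sp by simp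
    qed simp
    moreover have "(\<Sum>i<n. x i / S) = 1" using Sp by (simp add: S_def sum_divide_distrib[symmetric])
    moreover have "S powr (s+1) * (\<Sum>i<n. (x i / S) powr (s+1)) = (\<Sum>i<n. x i powr (s+1))"
      using Sp xp by (simp add: sum_distrib_left powr_divide less_imp_le)
    ultimately show ?thesis using True by (simp add: Cs_def)
  next
    case False
    have "(\<Sum>i<n. x i * 1) powr (s+1) \<le> (\<Sum>i<n. (1::real)) powr (s + 1 - 1) * (\<Sum>i<n. x i powr (s+1) * 1)"
      by (rule jensen_sum) (use False xp in \<open>auto intro: less_imp_le\<close>)
    then show ?thesis using False by (simp add: S_def Cs_def)
  qed
  finally show ?thesis .
qed

lemma Cs_nonneg: "Cs s n \<ge> 0" by (simp add: Cs_def)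

lemma GEN:
  fixes e :: "nat \<Rightarrow> int \<Rightarrow> real" and s p Zc :: real and n :: nat
  assumes p: "p \<ge> 1" and s: "s \<ge> -1" and n: "n \<ge> 1" and Zc: "Zc \<ge> 0"
    and e0: "\<And>j x. e j x \<ge> 0"
    and es: "\<And>j. j < n \<Longrightarrow> (\<lambda>x. e j x powr p) summable_on Zset"
    and cs: "\<And>j. j < n \<Longrightarrow> (\<lambda>x. \<bar>real_of_int x\<bar> powr (-(s+1)) * e j x) summable_on Zset"
    and cb: "\<And>j. j < n \<Longrightarrow> (\<Sum>\<^sub>\<infinity>x\<in>Zset. \<bar>real_of_int x\<bar> powr (-(s+1)) * e j x)
               \<le> Zc * (\<Sum>\<^sub>\<infinity>x\<in>Zset. e j x powr p) powr (1/p)"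
  shows "(\<lambda>g. \<Prod>j<n. \<bar>real_of_int (g j)\<bar> powr (-(s+1)) * e j (g j)) summable_on Pk n k"
    and "(\<lambda>k. (\<bar>real_of_int k\<bar> powr (s+1) * (\<Sum>\<^sub>\<infinity>g\<in>Pk n k. \<Prod>j<n. \<bar>real_of_int (g j)\<bar> powr (-(s+1)) * e j (g j))) powr p) summable_on Zset"
    and "(\<Sum>\<^sub>\<infinity>k\<in>Zset. (\<bar>real_of_int k\<bar> powr (s+1) * (\<Sum>\<^sub>\<infinity>g\<in>Pk n k. \<Prod>j<n. \<bar>real_of_int (g j)\<bar> powr (-(s+1)) * e j (g j))) powr p)
         \<le> (Cs s n * (real n * Zc ^ (n - 1) * (\<Prod>j<n. (\<Sum>\<^sub>\<infinity>x\<in>Zset. e j x powr p) powr (1/p)))) powr p"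
proof -
  define c where "c j x = \<bar>real_of_int x\<bar> powr (-(s+1)) * e j x" for j x
  have c0: "c j x \<ge> 0" for j x by (simp add: c_def e0)
  define E where "E j = (\<Sum>\<^sub>\<infinity>x\<in>Zset. e j x powr p) powr (1/p)" for j
  have E0: "E j \<ge> 0" for j by (simp add: E_def)
  define C where "C j = infsum (c j) Zset" for j
  have C0: "C j \<ge> 0" for j unfolding C_def by (rule infsum_nonneg) (simp add: c0)
  have csj: "c j summable_on Zset" if "j < n" for j using cs[OF that] by (simp add: c_def[abs_def])
  have CE: "C j \<le> Zc * E j" if "j < n" for j using cb[OF that] by (simp add: C_def E_def c_def[abs_def])
  define W where "W i g = (\<Prod>j\<in>{..<n}-{i}. c j (g j))" for i g
  define T where "T i k = (\<Sum>\<^sub>\<infinity>g\<in>Pk n k. e i (g i) * W i g)" for i k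
  define S where "S k = (\<Sum>\<^sub>\<infinity>g\<in>Pk n k. \<Prod>j<n. c j (g j))" for k
  have prodall: "(\<lambda>g. \<Prod>j\<in>{..<n}. c j (g j)) summable_on Pn n"
    using prod_PiE_nonneg[where A="{..<n}" and f=c and B="\<lambda>_. Zset"] c0 csj unfolding Pn_def by auto
  have Ssum: "(\<lambda>g. \<Prod>j<n. c j (g j)) summable_on Pk n k" for k
    by (rule summable_on_subset_banach[OF prodall Pk_sub])
  have Y: "(\<lambda>g. e i (g i) * W i g) summable_on Pk n k"
        "(\<lambda>k. T i k powr p) summable_on UNIV"
        "(\<Sum>\<^sub>\<infinity>k. T i k powr p) \<le> (\<Sum>\<^sub>\<infinity>x\<in>Zset. e i x powr p) * (\<Prod>j\<in>{..<n}-{i}. C j) powr p"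
    if "i < n" for i k
    using young(1)[where p=p and i=i and n=n and e="e i" and c=c and k=k]
      young(2,3)[where p=p and i=i and n=n and e="e i" and c=c] p that e0 c0 es csj unfolding T_def W_def C_def by auto
  have T0: "T i k \<ge> 0" for i k unfolding T_def W_def by (intro infsum_nonneg mult_nonneg_nonneg prod_nonneg e0 c0)
  define N where "N i = E i * (\<Prod>j\<in>{..<n}-{i}. C j)" for i
  have NT: "(\<Sum>\<^sub>\<infinity>k. T i k powr p) \<le> N i powr p" if "i < n" for i
  proof -
    have "(E i * (\<Prod>j\<in>{..<n}-{i}. C j)) powr p = (\<Sum>\<^sub>\<infinity>x\<in>Zset. e i x powr p) * (\<Prod>j\<in>{..<n}-{i}. C j) powr p"
    proof -
      have a: "(\<Sum>\<^sub>\<infinity>x\<in>Zset. e i x powr p) \<ge> 0" by (intro infsum_nonneg) auto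
      have b: "(\<Prod>j\<in>{..<n}-{i}. C j) \<ge> 0" by (intro prod_nonneg C0)
      show ?thesis using a b p unfolding E_def by (simp add: powr_mult powr_powr)
    qed
    then show ?thesis using Y(3)[OF that] by (simp add: N_def)
  qed
  have Mk: "(\<lambda>k. (\<Sum>i\<in>{..<n}. T i k) powr p) summable_on UNIV \<and>
         (\<Sum>\<^sub>\<infinity>k. (\<Sum>i\<in>{..<n}. T i k) powr p) \<le> (\<Sum>i\<in>{..<n}. N i) powr p"
    by (rule minkowski_fin) (use p T0 NT Y(2) in \<open>auto simp: N_def intro!: mult_nonneg_nonneg prod_nonneg C0 E0\<close>)
  have ptw: "\<bar>real_of_int k\<bar> powr (s+1) * S k \<le> Cs s n * (\<Sum>i<n. T i k)" if k: "k \<in> Zset" for k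
  proof -
    have pt: "\<bar>real_of_int k\<bar> powr (s+1) * (\<Prod>j<n. c j (g j)) \<le> Cs s n * (\<Sum>i<n. e i (g i) * W i g)"
      if g: "g \<in> Pk n k" for g
    proof -
      have gnz: "g i \<noteq> 0" if "i < n" for i using g that by (auto simp: Pk_def Pn_def PiE_def Pi_def Zset_def)
      have ksum: "real_of_int k = (\<Sum>i<n. real_of_int (g i))" using g by (auto simp: Pk_def)
      have kle: "\<bar>real_of_int k\<bar> \<le> (\<Sum>i<n. \<bar>real_of_int (g i)\<bar>)" unfolding ksum by (rule sum_abs)
      have wb: "\<bar>real_of_int k\<bar> powr (s+1) \<le> Cs s n * (\<Sum>i<n. \<bar>real_of_int (g i)\<bar> powr (s+1))"
        by (rule weight_bound[OF s n]) (use gnz kle k in \<open>auto simp: Zset_def\<close>)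
      have P0: "(\<Prod>j<n. c j (g j)) \<ge> 0" by (intro prod_nonneg c0)
      have "\<bar>real_of_int k\<bar> powr (s+1) * (\<Prod>j<n. c j (g j))
            \<le> Cs s n * (\<Sum>i<n. \<bar>real_of_int (g i)\<bar> powr (s+1)) * (\<Prod>j<n. c j (g j))"
        using wb P0 by (rule mult_right_mono)
      also have "\<dots> = Cs s n * (\<Sum>i<n. \<bar>real_of_int (g i)\<bar> powr (s+1) * (\<Prod>j<n. c j (g j)))"
        by (simp add: sum_distrib_right mult.assoc)
      also have "(\<Sum>i<n. \<bar>real_of_int (g i)\<bar> powr (s+1) * (\<Prod>j<n. c j (g j))) = (\<Sum>i<n. e i (g i) * W i g)"
      proof (rule sum.cong)
        fix i assume i: "i \<in> {..<n}"
        have "(\<Prod>j<n. c j (g j)) = c i (g i) * W i g" using i by (simp add: W_def prod.remove)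
        moreover have "\<bar>real_of_int (g i)\<bar> powr (s+1) * c i (g i) = e i (g i)"
        proof -
          have "\<bar>real_of_int (g i)\<bar> powr (s+1) * \<bar>real_of_int (g i)\<bar> powr (-(s+1)) = 1"
            using gnz[of i] i by (simp add: powr_add[symmetric])
          then show ?thesis by (simp add: c_def mult.assoc[symmetric])
        qed
        ultimately show "\<bar>real_of_int (g i)\<bar> powr (s+1) * (\<Prod>j<n. c j (g j)) = e i (g i) * W i g"
          by (simp add: mult.assoc[symmetric])
      qed simp
      finally show ?thesis .
    qed
    have "\<bar>real_of_int k\<bar> powr (s+1) * S k = (\<Sum>\<^sub>\<infinity>g\<in>Pk n k. \<bar>real_of_int k\<bar> powr (s+1) * (\<Prod>j<n. c j (g j)))"
      unfolding S_def by (simp add: infsum_cmult_right')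
    also have "\<dots> \<le> (\<Sum>\<^sub>\<infinity>g\<in>Pk n k. Cs s n * (\<Sum>i<n. e i (g i) * W i g))"
    proof (rule infsum_mono)
      show "(\<lambda>g. \<bar>real_of_int k\<bar> powr (s+1) * (\<Prod>j<n. c j (g j))) summable_on Pk n k"
        by (intro summable_on_cmult_right Ssum)
      have "(\<lambda>g. \<Sum>i<n. e i (g i) * W i g) summable_on Pk n k"
        using infsum_sum_fin[of "{..<n}" "\<lambda>i g. e i (g i) * W i g" "Pk n k"] Y(1) by auto
      then show "(\<lambda>g. Cs s n * (\<Sum>i<n. e i (g i) * W i g)) summable_on Pk n k"
        by (intro summable_on_cmult_right)
    qed (rule pt)
    also have "\<dots> = Cs s n * (\<Sum>i<n. T i k)"
      using infsum_sum_fin[of "{..<n}" "\<lambda>i g. e i (g i) * W i g" "Pk n k"] Y(1)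
      by (simp add: infsum_cmult_right' T_def)
    finally show ?thesis .
  qed
  define L where "L k = (\<bar>real_of_int k\<bar> powr (s+1) * S k) powr p" for k
  define R where "R k = Cs s n powr p * (\<Sum>i\<in>{..<n}. T i k) powr p" for k
  have S0: "S k \<ge> 0" for k unfolding S_def by (intro infsum_nonneg prod_nonneg c0)
  have LR: "L k \<le> R k" if "k \<in> Zset" for k
  proof -
    have "L k \<le> (Cs s n * (\<Sum>i<n. T i k)) powr p"
      unfolding L_def using ptw[OF that] p S0 by (intro powr_mono2) auto
    also have "\<dots> = R k" unfolding R_def using Cs_nonneg T0 by (simp add: powr_mult sum_nonneg)
    finally show ?thesis .
  qed
  have Rs: "R summable_on UNIV" unfolding R_def using Mk by (intro summable_on_cmult_right) auto
  have RsZ: "R summable_on Zset" by (rule summable_on_subset_banach[OF Rs]) auto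
  have L0: "L k \<ge> 0" for k by (simp add: L_def)
  have Ls: "L summable_on Zset" by (rule summable_on_comparison_test[OF RsZ]) (use LR L0 in auto)
  have R0: "R k \<ge> 0" for k by (simp add: R_def)
  have "infsum L Zset \<le> infsum R Zset" by (rule infsum_mono[OF Ls RsZ LR])
  also have "\<dots> \<le> infsum R UNIV" by (rule infsum_mono2[OF RsZ Rs]) (use R0 in auto)
  also have "\<dots> \<le> Cs s n powr p * (\<Sum>i\<in>{..<n}. N i) powr p"
    unfolding R_def using Mk by (simp add: infsum_cmult_right' mult_left_mono)
  also have "\<dots> = (Cs s n * (\<Sum>i\<in>{..<n}. N i)) powr p"
    using Cs_nonneg by (simp add: powr_mult sum_nonneg N_def mult_nonneg_nonneg prod_nonneg C0 E0)
  also have "\<dots> \<le> (Cs s n * (real n * Zc ^ (n - 1) * (\<Prod>j<n. E j))) powr p"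
  proof -
    have "N i \<le> Zc ^ (n - 1) * (\<Prod>j<n. E j)" if i: "i < n" for i
    proof -
      have "(\<Prod>j\<in>{..<n}-{i}. C j) \<le> (\<Prod>j\<in>{..<n}-{i}. Zc * E j)"
        by (intro prod_mono) (auto simp: C0 CE)
      also have "\<dots> = Zc ^ (n - 1) * (\<Prod>j\<in>{..<n}-{i}. E j)" using i by (simp add: prod.distrib)
      finally have "N i \<le> E i * (Zc ^ (n - 1) * (\<Prod>j\<in>{..<n}-{i}. E j))"
        unfolding N_def by (intro mult_left_mono E0)
      also have "\<dots> = Zc ^ (n - 1) * (\<Prod>j<n. E j)" using i by (simp add: prod.remove)
      finally show ?thesis .
    qed
    then have "(\<Sum>i\<in>{..<n}. N i) \<le> real n * (Zc ^ (n - 1) * (\<Prod>j<n. E j))"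
      using sum_mono[of "{..<n}" N "\<lambda>_. Zc ^ (n - 1) * (\<Prod>j<n. E j)"] by simp
    then show ?thesis using p Cs_nonneg
      by (intro powr_mono2 mult_left_mono) (auto simp: sum_nonneg N_def mult_nonneg_nonneg prod_nonneg C0 E0)
  qed
  finally have fin: "infsum L Zset \<le> (Cs s n * (real n * Zc ^ (n - 1) * (\<Prod>j<n. E j))) powr p" .
  show "(\<lambda>g. \<Prod>j<n. \<bar>real_of_int (g j)\<bar> powr (-(s+1)) * e j (g j)) summable_on Pk n k"
    using Ssum by (simp add: c_def)
  show "(\<lambda>k. (\<bar>real_of_int k\<bar> powr (s+1) * (\<Sum>\<^sub>\<infinity>g\<in>Pk n k. \<Prod>j<n. \<bar>real_of_int (g j)\<bar> powr (-(s+1)) * e j (g j))) powr p) summable_on Zset"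
    using Ls unfolding L_def[abs_def] S_def c_def by simp
  show "(\<Sum>\<^sub>\<infinity>k\<in>Zset. (\<bar>real_of_int k\<bar> powr (s+1) * (\<Sum>\<^sub>\<infinity>g\<in>Pk n k. \<Prod>j<n. \<bar>real_of_int (g j)\<bar> powr (-(s+1)) * e j (g j))) powr p)
         \<le> (Cs s n * (real n * Zc ^ (n - 1) * (\<Prod>j<n. (\<Sum>\<^sub>\<infinity>x\<in>Zset. e j x powr p) powr (1/p)))) powr p"
    using fin unfolding L_def[abs_def] S_def c_def E_def by simp
qed

lemma zsum_powr:
  fixes beta :: real
  assumes "beta > 1"
  shows "(\<lambda>x::int. \<bar>real_of_int x\<bar> powr (-beta)) summable_on Zset"
proof -
  have sn: "summable (\<lambda>n::nat. real n powr (-beta))" using assms by (subst summable_real_powr_iff) auto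
  then have sU: "(\<lambda>n::nat. real n powr (-beta)) summable_on UNIV"
    by (rule summable_nonneg_imp_summable_on) simp
  define f where "f x = \<bar>real_of_int x\<bar> powr (-beta)" for x :: int
  have i1: "inj_on (\<lambda>n::nat. int n) UNIV" by (simp add: inj_on_def)
  have i2: "inj_on (\<lambda>n::nat. - int n) UNIV" by (simp add: inj_on_def)
  have "(f \<circ> (\<lambda>n::nat. int n)) summable_on UNIV" using sU by (simp add: f_def o_def)
  then have a: "f summable_on range (\<lambda>n::nat. int n)" using summable_on_reindex[OF i1] by blast
  have "(f \<circ> (\<lambda>n::nat. - int n)) summable_on UNIV" using sU by (simp add: f_def o_def)
  then have b: "f summable_on range (\<lambda>n::nat. - int n)" using summable_on_reindex[OF i2] by blast
  have a': "f summable_on {x. x > 0}"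
  proof (rule summable_on_subset_banach[OF a], rule subsetI)
    fix x :: int assume "x \<in> {x. x > 0}"
    then show "x \<in> range (\<lambda>n::nat. int n)" by (auto intro: image_eqI[of _ _ "nat x"])
  qed
  have b': "f summable_on {x. x < 0}"
  proof (rule summable_on_subset_banach[OF b], rule subsetI)
    fix x :: int assume "x \<in> {x. x < 0}"
    then show "x \<in> range (\<lambda>n::nat. - int n)" by (auto intro: image_eqI[of _ _ "nat (- x)"])
  qed
  have "f summable_on ({x. x > 0} \<union> {x. x < 0})"
    by (rule summable_on_Un_disjoint[OF a' b']) auto
  moreover have "{x. x > 0} \<union> {x. x < 0} = Zset" by (auto simp: Zset_def)
  ultimately show ?thesis by (simp add: f_def[abs_def])
qed

lemma Zsp_one:
  assumes s: "s \<ge> -1" shows "Zsp s 1 = 1"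
proof -
  have "(SUP k\<in>Zset. \<bar>real_of_int k\<bar> powr (-(s+1))) = 1"
  proof (rule cSup_eq_maximum)
    show "1 \<in> (\<lambda>k. \<bar>real_of_int k\<bar> powr (-(s+1))) ` Zset"
      by (rule image_eqI[of _ _ 1]) (auto simp: Zset_def)
    fix y assume "y \<in> (\<lambda>k. \<bar>real_of_int k\<bar> powr (-(s+1))) ` Zset"
    then obtain k where k: "k \<in> Zset" "y = \<bar>real_of_int k\<bar> powr (-(s+1))" by auto
    have k1: "\<bar>real_of_int k\<bar> \<ge> 1" using k by (auto simp: Zset_def)
    then have "\<bar>real_of_int k\<bar> powr (-(s+1)) \<le> \<bar>real_of_int k\<bar> powr 0" using s by (intro powr_mono) auto
    then show "y \<le> 1" using k k1 by (simp split: if_splits)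
  qed
  then show ?thesis unfolding Zsp_def by simp
qed

lemma holder_Z:
  fixes b :: "int \<Rightarrow> real" and s p :: real
  assumes sp: "(s > - 1 / p \<and> p > 1) \<or> (s \<ge> -1 \<and> p = 1)"
    and b0: "\<And>x. b x \<ge> 0" and bs: "(\<lambda>x. b x powr p) summable_on Zset"
  shows "(\<lambda>x. \<bar>real_of_int x\<bar> powr (-(s+1)) * b x) summable_on Zset \<and>
     (\<Sum>\<^sub>\<infinity>x\<in>Zset. \<bar>real_of_int x\<bar> powr (-(s+1)) * b x) \<le> Zsp s p * (\<Sum>\<^sub>\<infinity>x\<in>Zset. b x powr p) powr (1/p)"
proof (cases "p = 1")
  case True
  then have s: "s \<ge> -1" using sp by auto
  have ule: "\<bar>real_of_int x\<bar> powr (-(s+1)) * b x \<le> b x" if "x \<in> Zset" for x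
  proof -
    have "\<bar>real_of_int x\<bar> \<ge> 1" using that by (auto simp: Zset_def)
    then have "\<bar>real_of_int x\<bar> powr (-(s+1)) \<le> \<bar>real_of_int x\<bar> powr 0" using s by (intro powr_mono) auto
    then have "\<bar>real_of_int x\<bar> powr (-(s+1)) \<le> 1" using \<open>\<bar>real_of_int x\<bar> \<ge> 1\<close> by (simp split: if_splits)
    then show ?thesis using b0[of x] by (simp add: mult_left_le_one_le)
  qed
  have bs1: "b summable_on Zset" using bs True b0 by simp
  have s1: "(\<lambda>x. \<bar>real_of_int x\<bar> powr (-(s+1)) * b x) summable_on Zset"
    by (rule summable_on_comparison_test[OF bs1]) (use ule b0 in auto)
  have "(\<Sum>\<^sub>\<infinity>x\<in>Zset. \<bar>real_of_int x\<bar> powr (-(s+1)) * b x) \<le> infsum b Zset"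
    by (rule infsum_mono[OF s1 bs1 ule])
  moreover have "infsum b Zset \<ge> 0" by (rule infsum_nonneg) (simp add: b0)
  ultimately show ?thesis using s1 True Zsp_one[OF s] b0 by simp
next
  case False
  then have p: "p > 1" and s: "s > - 1 / p" using sp by auto
  define q where "q = p / (p - 1)"
  have q1: "q > 1" using p by (simp add: q_def field_simps)
  have pq: "p * (1 - q) + q = 0" using p by (simp add: q_def field_simps)
  define u where "u x = \<bar>real_of_int x\<bar> powr (-(s+1))" for x :: int
  have up: "u x > 0" if "x \<in> Zset" for x using that by (simp add: u_def Zset_def)
  have beta: "(s+1) * q > 1"
  proof -
    have "s + 1 > (p - 1) / p" using s p by (simp add: field_simps)
    then have "(s+1) * q > (p - 1) / p * q" using q1 by (intro mult_strict_right_mono) auto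
    then show ?thesis using p by (simp add: q_def)
  qed
  have ws: "(\<lambda>x. u x powr q) summable_on Zset"
  proof -
    have "(\<lambda>x::int. \<bar>real_of_int x\<bar> powr (-((s+1) * q))) summable_on Zset" by (rule zsum_powr[OF beta])
    moreover have "- ((s + 1) * q) = (- s - 1) * q" by (simp add: algebra_simps)
    ultimately show ?thesis by (simp add: u_def powr_powr)
  qed
  define e where "e x = b x * u x powr (1 - q)" for x
  have e1: "e x powr p * u x powr q = b x powr p" if "x \<in> Zset" for x
  proof -
    have "e x powr p * u x powr q = b x powr p * u x powr (p * (1 - q) + q)"
      using up[OF that] b0[of x] by (simp add: e_def powr_mult powr_powr powr_add mult.commute)
    then show ?thesis using pq up[OF that] by simp
  qed
  have e2: "e x * u x powr q = u x * b x" if "x \<in> Zset" for x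
    using up[OF that] by (simp add: e_def powr_add[symmetric])
  have es: "(\<lambda>x. e x powr p * u x powr q) summable_on Zset"
    using bs by (rule summable_on_cong[THEN iffD1, rotated]) (simp add: e1)
  have J1: "(\<lambda>x. e x * u x powr q) summable_on Zset"
    by (rule jensen_infsum(1)[of p]) (use p ws es b0 up in \<open>auto simp: e_def intro: less_imp_le\<close>)
  have J2: "(\<Sum>\<^sub>\<infinity>x\<in>Zset. e x * u x powr q) powr p \<le> (\<Sum>\<^sub>\<infinity>x\<in>Zset. u x powr q) powr (p - 1) * (\<Sum>\<^sub>\<infinity>x\<in>Zset. e x powr p * u x powr q)"
    by (rule jensen_infsum(2)[of p]) (use p ws es b0 up in \<open>auto simp: e_def intro: less_imp_le\<close>)
  have S1: "(\<lambda>x. u x * b x) summable_on Zset"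
    using J1 by (rule summable_on_cong[THEN iffD1, rotated]) (simp add: e2)
  have eqS: "(\<Sum>\<^sub>\<infinity>x\<in>Zset. e x * u x powr q) = (\<Sum>\<^sub>\<infinity>x\<in>Zset. u x * b x)"
    by (rule infsum_cong) (simp add: e2)
  have eqB: "(\<Sum>\<^sub>\<infinity>x\<in>Zset. e x powr p * u x powr q) = (\<Sum>\<^sub>\<infinity>x\<in>Zset. b x powr p)"
    by (rule infsum_cong) (simp add: e1)
  define S where "S = (\<Sum>\<^sub>\<infinity>x\<in>Zset. u x * b x)"
  define Wq where "Wq = (\<Sum>\<^sub>\<infinity>x\<in>Zset. u x powr q)"
  define Bp where "Bp = (\<Sum>\<^sub>\<infinity>x\<in>Zset. b x powr p)"
  have S0: "S \<ge> 0" unfolding S_def by (intro infsum_nonneg mult_nonneg_nonneg b0) (simp add: u_def)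
  have W0: "Wq \<ge> 0" unfolding Wq_def by (intro infsum_nonneg) simp
  have B0: "Bp \<ge> 0" unfolding Bp_def by (intro infsum_nonneg) simp
  have "S powr p \<le> Wq powr (p - 1) * Bp" using J2 eqS eqB by (simp add: S_def Wq_def Bp_def)
  then have "(S powr p) powr (1/p) \<le> (Wq powr (p - 1) * Bp) powr (1/p)"
    using S0 W0 B0 p by (intro powr_mono2) auto
  also have "(S powr p) powr (1/p) = S" using S0 p by (simp add: powr_powr)
  also have "(Wq powr (p - 1) * Bp) powr (1/p) = Wq powr (1/q) * Bp powr (1/p)"
  proof -
    have "(p - 1) * (1/p) = 1/q" using p by (simp add: q_def field_simps)
    then show ?thesis using W0 B0 by (simp add: powr_mult powr_powr)
  qed
  also have "Wq powr (1/q) = Zsp s p" using False by (simp add: Zsp_def Let_def q_def Wq_def u_def)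
  finally show ?thesis using S1 by (simp add: S_def Bp_def u_def)
qed

lemma prod_diff_bound:
  fixes x y :: "nat \<Rightarrow> complex"
  shows "cmod ((\<Prod>j<n. x j) - (\<Prod>j<n. y j)) \<le>
    (\<Sum>m<n. \<Prod>j<n. (if j < m then cmod (y j) else if j = m then cmod (x j - y j) else cmod (x j)))"
proof (induction n)
  case 0
  then show ?case by simp
next
  case (Suc n)
  define F where "F m j = (if j < m then cmod (y j) else if j = m then cmod (x j - y j) else cmod (x j))" for m j
  have deq: "(\<Prod>j<Suc n. x j) - (\<Prod>j<Suc n. y j) = ((\<Prod>j<n. x j) - (\<Prod>j<n. y j)) * x n + (\<Prod>j<n. y j) * (x n - y n)"
    by (simp add: algebra_simps)
  have "cmod ((\<Prod>j<Suc n. x j) - (\<Prod>j<Suc n. y j)) \<le> cmod ((\<Prod>j<n. x j) - (\<Prod>j<n. y j)) * cmod (x n) + (\<Prod>j<n. cmod (y j)) * cmod (x n - y n)"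
  proof -
    have "cmod (((\<Prod>j<n. x j) - (\<Prod>j<n. y j)) * x n + (\<Prod>j<n. y j) * (x n - y n))
       \<le> cmod (((\<Prod>j<n. x j) - (\<Prod>j<n. y j)) * x n) + cmod ((\<Prod>j<n. y j) * (x n - y n))"
      by (rule norm_triangle_ineq)
    then show ?thesis unfolding deq by (simp add: norm_mult prod_norm)
  qed
  also have "\<dots> \<le> (\<Sum>m<n. \<Prod>j<n. F m j) * cmod (x n) + (\<Prod>j<n. cmod (y j)) * cmod (x n - y n)"
    using Suc.IH by (intro add_right_mono mult_right_mono) (auto simp: F_def)
  also have "\<dots> = (\<Sum>m<Suc n. \<Prod>j<Suc n. F m j)"
  proof -
    have "(\<Sum>m<Suc n. \<Prod>j<Suc n. F m j) = (\<Sum>m<n. (\<Prod>j<n. F m j) * F m n) + (\<Prod>j<n. F n j) * F n n"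
      by simp
    also have "(\<Sum>m<n. (\<Prod>j<n. F m j) * F m n) = (\<Sum>m<n. (\<Prod>j<n. F m j) * cmod (x n))"
      by (intro sum.cong) (auto simp: F_def)
    also have "(\<Prod>j<n. F n j) = (\<Prod>j<n. cmod (y j))" by (intro prod.cong) (auto simp: F_def)
    also have "F n n = cmod (x n - y n)" by (simp add: F_def)
    finally show ?thesis by (simp add: sum_distrib_right)
  qed
  finally show ?case by (simp add: F_def)
qed

lemma tuples_bij: "bij_betw (\<lambda>g. map g [0..<n]) (Pk n k) (tuples n k)"
proof (rule bij_betw_imageI)
  show "inj_on (\<lambda>g. map g [0..<n]) (Pk n k)"
  proof (rule inj_onI)
    fix g g' assume g: "g \<in> Pk n k" and g': "g' \<in> Pk n k" and eq: "map g [0..<n] = map g' [0..<n]"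
    have "g j = g' j" if "j < n" for j using arg_cong[OF eq, of "\<lambda>l. l ! j"] that by simp
    moreover have "g j = g' j" if "\<not> j < n" for j using g g' that
      by (auto simp: Pk_def Pn_def PiE_def extensional_def)
    ultimately show "g = g'" by (metis ext)
  qed
  show "(\<lambda>g. map g [0..<n]) ` Pk n k = tuples n k"
  proof
    show "(\<lambda>g. map g [0..<n]) ` Pk n k \<subseteq> tuples n k"
    proof
      fix l assume "l \<in> (\<lambda>g. map g [0..<n]) ` Pk n k"
      then obtain g where g: "g \<in> Pk n k" "l = map g [0..<n]" by auto
      have "sum_list (map g [0..<n]) = (\<Sum>i<n. g i)"
        by (simp add: sum_set_upt_conv_sum_list_nat[symmetric] atLeast0LessThan)
      then show "l \<in> tuples n k" using g
        by (auto simp: tuples_def Pk_def Pn_def PiE_def Pi_def Zset_def)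
    qed
    show "tuples n k \<subseteq> (\<lambda>g. map g [0..<n]) ` Pk n k"
    proof
      fix l assume l: "l \<in> tuples n k"
      define g where "g i = (if i < n then l ! i else undefined)" for i
      have lm: "map g [0..<n] = l" using l by (auto simp: tuples_def g_def intro: nth_equalityI)
      have "sum_list (map g [0..<n]) = (\<Sum>i<n. g i)"
        by (simp add: sum_set_upt_conv_sum_list_nat[symmetric] atLeast0LessThan)
      then have "g \<in> Pk n k" using l lm
        by (auto simp: tuples_def Pk_def Pn_def PiE_def Pi_def Zset_def g_def extensional_def)
      then show "l \<in> (\<lambda>g. map g [0..<n]) ` Pk n k" using lm by force
    qed
  qed
qed

lemma NN_pt:
  fixes w :: "int \<Rightarrow> complex" and t :: real
  assumes k: "k \<noteq> 0"
    and sm: "(\<lambda>g. \<Prod>j<n. cmod (w (g j)) / \<bar>real_of_int (g j)\<bar>) summable_on Pk n k"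
  shows "((\<lambda>g. exp (\<i> * of_real (of_int (Phi (map g [0..<n])) * t)) * (\<Prod>j<n. w (g j) / of_int (g j)))
           has_sum (\<Sum>\<^sub>\<infinity>ks\<in>tuples n k. exp (\<i> * of_real (of_int (Phi ks) * t)) * (\<Prod>j<n. w (ks ! j) / of_int (ks ! j)))) (Pk n k)"
    and "NN n t w k = ((-1) ^ n * of_int k / (2 ^ (n - 1) * fact n)) *
           (\<Sum>\<^sub>\<infinity>ks\<in>tuples n k. exp (\<i> * of_real (of_int (Phi ks) * t)) * (\<Prod>j<n. w (ks ! j) / of_int (ks ! j)))"
    and "cmod (NN n t w k) \<le> \<bar>real_of_int k\<bar> / (2 ^ (n - 1) * fact n) *
           (\<Sum>\<^sub>\<infinity>g\<in>Pk n k. \<Prod>j<n. cmod (w (g j)) / \<bar>real_of_int (g j)\<bar>)"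
proof -
  define F where "F ks = exp (\<i> * of_real (of_int (Phi ks) * t)) * (\<Prod>j<n. w (ks ! j) / of_int (ks ! j))" for ks
  define G where "G g = exp (\<i> * of_real (of_int (Phi (map g [0..<n])) * t)) * (\<Prod>j<n. w (g j) / of_int (g j))" for g
  have FG: "F (map g [0..<n]) = G g" for g
    unfolding F_def G_def by (intro arg_cong2[where f="(*)"] refl prod.cong) (auto simp: nth_map_upt)
  have nG: "norm (G g) = (\<Prod>j<n. cmod (w (g j)) / \<bar>real_of_int (g j)\<bar>)" for g
    by (simp add: G_def norm_mult prod_norm[symmetric] norm_divide)
  have Gs: "G summable_on Pk n k"
  proof (rule abs_summable_summable)
    show "(\<lambda>g. norm (G g)) summable_on Pk n k" using sm by (simp add: nG)
  qed
  have eq: "infsum F (tuples n k) = infsum G (Pk n k)"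
    using infsum_reindex_bij_betw[OF tuples_bij, of F n k] by (simp add: FG)
  have hs: "(G has_sum (infsum F (tuples n k))) (Pk n k)" using Gs eq by (simp add: has_sum_infsum)
  then show "((\<lambda>g. exp (\<i> * of_real (of_int (Phi (map g [0..<n])) * t)) * (\<Prod>j<n. w (g j) / of_int (g j)))
           has_sum (\<Sum>\<^sub>\<infinity>ks\<in>tuples n k. exp (\<i> * of_real (of_int (Phi ks) * t)) * (\<Prod>j<n. w (ks ! j) / of_int (ks ! j)))) (Pk n k)"
    unfolding F_def[abs_def] G_def[abs_def] by simp
  show nn: "NN n t w k = ((-1) ^ n * of_int k / (2 ^ (n - 1) * fact n)) *
           (\<Sum>\<^sub>\<infinity>ks\<in>tuples n k. exp (\<i> * of_real (of_int (Phi ks) * t)) * (\<Prod>j<n. w (ks ! j) / of_int (ks ! j)))"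
    using k by (simp add: NN_def)
  have "norm (infsum F (tuples n k)) \<le> (\<Sum>\<^sub>\<infinity>g\<in>Pk n k. \<Prod>j<n. cmod (w (g j)) / \<bar>real_of_int (g j)\<bar>)"
    by (rule norm_infsum_le[OF hs]) (use sm in \<open>auto simp: nG has_sum_infsum\<close>)
  moreover have cm: "cmod ((-1) ^ n * of_int k / (2 ^ (n - 1) * fact n) :: complex) = \<bar>real_of_int k\<bar> / (2 ^ (n - 1) * fact n)"
    by (simp add: norm_divide norm_mult norm_power)
  ultimately show "cmod (NN n t w k) \<le> \<bar>real_of_int k\<bar> / (2 ^ (n - 1) * fact n) *
           (\<Sum>\<^sub>\<infinity>g\<in>Pk n k. \<Prod>j<n. cmod (w (g j)) / \<bar>real_of_int (g j)\<bar>)"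
  proof -
    assume a: "norm (infsum F (tuples n k)) \<le> (\<Sum>\<^sub>\<infinity>g\<in>Pk n k. \<Prod>j<n. cmod (w (g j)) / \<bar>real_of_int (g j)\<bar>)"
    have "cmod (NN n t w k) = cmod ((-1) ^ n * of_int k / (2 ^ (n - 1) * fact n) :: complex) * norm (infsum F (tuples n k))"
      unfolding nn F_def[symmetric] by (rule norm_mult)
    also have "\<dots> \<le> cmod ((-1) ^ n * of_int k / (2 ^ (n - 1) * fact n) :: complex) * (\<Sum>\<^sub>\<infinity>g\<in>Pk n k. \<Prod>j<n. cmod (w (g j)) / \<bar>real_of_int (g j)\<bar>)"
      by (rule mult_left_mono[OF a]) simp
    finally show ?thesis using cm by simp
  qed
qed

lemma NN_diff_pt:
  fixes v v' :: "int \<Rightarrow> complex" and t :: real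
  assumes k: "k \<noteq> 0"
    and smv: "(\<lambda>g. \<Prod>j<n. cmod (v (g j)) / \<bar>real_of_int (g j)\<bar>) summable_on Pk n k"
    and smv': "(\<lambda>g. \<Prod>j<n. cmod (v' (g j)) / \<bar>real_of_int (g j)\<bar>) summable_on Pk n k"
    and smD: "(\<lambda>g. \<Sum>m<n. \<Prod>j<n. (if j < m then cmod (v' (g j)) / \<bar>real_of_int (g j)\<bar>
                else if j = m then cmod (v (g j) - v' (g j)) / \<bar>real_of_int (g j)\<bar>
                else cmod (v (g j)) / \<bar>real_of_int (g j)\<bar>)) summable_on Pk n k"
  shows "cmod (NN n t v k - NN n t v' k) \<le> \<bar>real_of_int k\<bar> / (2 ^ (n - 1) * fact n) *
     (\<Sum>\<^sub>\<infinity>g\<in>Pk n k. \<Sum>m<n. \<Prod>j<n. (if j < m then cmod (v' (g j)) / \<bar>real_of_int (g j)\<bar>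
                else if j = m then cmod (v (g j) - v' (g j)) / \<bar>real_of_int (g j)\<bar>
                else cmod (v (g j)) / \<bar>real_of_int (g j)\<bar>))"
proof -
  define E where "E g = exp (\<i> * of_real (of_int (Phi (map g [0..<n])) * t))" for g
  define Q where "Q w g = (\<Prod>j<n. w (g j) / of_int (g j))" for w :: "int \<Rightarrow> complex" and g
  define S where "S w = (\<Sum>\<^sub>\<infinity>ks\<in>tuples n k. exp (\<i> * of_real (of_int (Phi ks) * t)) * (\<Prod>j<n. w (ks ! j) / of_int (ks ! j)))" for w
  define coef :: complex where "coef = (-1) ^ n * of_int k / (2 ^ (n - 1) * fact n)"
  define D where "D g = (\<Sum>m<n. \<Prod>j<n. (if j < m then cmod (v' (g j)) / \<bar>real_of_int (g j)\<bar>
                else if j = m then cmod (v (g j) - v' (g j)) / \<bar>real_of_int (g j)\<bar>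
                else cmod (v (g j)) / \<bar>real_of_int (g j)\<bar>))" for g
  have h1: "((\<lambda>g. E g * Q v g) has_sum S v) (Pk n k)"
    using NN_pt(1)[OF k smv, of t] unfolding E_def Q_def S_def by simp
  have h2: "((\<lambda>g. E g * Q v' g) has_sum S v') (Pk n k)"
    using NN_pt(1)[OF k smv', of t] unfolding E_def Q_def S_def by simp
  have n1: "NN n t v k = coef * S v" using NN_pt(2)[OF k smv, of t] unfolding S_def coef_def by simp
  have n2: "NN n t v' k = coef * S v'" using NN_pt(2)[OF k smv', of t] unfolding S_def coef_def by simp
  have hd: "((\<lambda>g. E g * Q v g - E g * Q v' g) has_sum (S v - S v')) (Pk n k)"
  proof -
    have "((\<lambda>g. - (E g * Q v' g)) has_sum (- S v')) (Pk n k)" using h2 by (simp add: has_sum_uminus)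
    from has_sum_add[OF h1 this] show ?thesis by simp
  qed
  have pb: "norm (E g * Q v g - E g * Q v' g) \<le> D g" for g
  proof -
    have "norm (E g * Q v g - E g * Q v' g) = cmod (Q v g - Q v' g)"
      by (simp add: E_def right_diff_distrib[symmetric] norm_mult)
    also have "\<dots> \<le> D g"
      unfolding Q_def D_def
      by (rule order.trans[OF prod_diff_bound]) (auto intro!: sum_mono prod_mono simp: norm_divide diff_divide_distrib[symmetric])
    finally show ?thesis .
  qed
  have nb: "norm (S v - S v') \<le> infsum D (Pk n k)"
  proof (rule norm_infsum_le[OF hd, where g=D])
    show "(D has_sum infsum D (Pk n k)) (Pk n k)" using smD by (simp add: D_def[abs_def] has_sum_infsum)
  qed (rule pb)
  moreover have cm: "cmod coef = \<bar>real_of_int k\<bar> / (2 ^ (n - 1) * fact n)"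
    by (simp add: coef_def norm_divide norm_mult norm_power)
  moreover have "cmod (NN n t v k - NN n t v' k) = cmod coef * norm (S v - S v')"
    by (simp add: n1 n2 right_diff_distrib[symmetric] norm_mult)
  moreover have "cmod coef * norm (S v - S v') \<le> cmod coef * infsum D (Pk n k)"
    using nb by (rule mult_left_mono) simp
  ultimately have "cmod (NN n t v k - NN n t v' k) \<le> cmod coef * infsum D (Pk n k)"
    by linarith
  then show ?thesis using cm unfolding D_def by simp
qed

lemma powr_sum_le:
  fixes a c p :: real
  assumes "a \<ge> 0" "c \<ge> 0" "p \<ge> 0"
  shows "(a + c) powr p \<le> 2 powr p * (a powr p + c powr p)"
proof -
  have "(a + c) powr p \<le> (2 * max a c) powr p" using assms by (intro powr_mono2) auto
  also have "\<dots> = 2 powr p * max a c powr p" using assms by (simp add: powr_mult)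
  also have "max a c powr p \<le> a powr p + c powr p" by (simp add: max_def)
  then have "2 powr p * max a c powr p \<le> 2 powr p * (a powr p + c powr p)" by (intro mult_left_mono) auto
  finally show ?thesis .
qed

lemma fl_finish:
  fixes A B :: "int \<Rightarrow> real" and K R p :: real
  assumes p: "p \<ge> 1" and A0: "\<And>k. k \<in> Zset \<Longrightarrow> 0 \<le> A k" and AB: "\<And>k. k \<in> Zset \<Longrightarrow> A k \<le> K * B k"
    and Bs: "(\<lambda>k. B k powr p) summable_on Zset" and Bb: "(\<Sum>\<^sub>\<infinity>k\<in>Zset. B k powr p) \<le> R powr p"
    and R0: "R \<ge> 0" and K0: "K \<ge> 0"
  shows "(\<lambda>k. A k powr p) summable_on Zset \<and> (\<Sum>\<^sub>\<infinity>k\<in>Zset. A k powr p) powr (1/p) \<le> K * R"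
proof -
  have pt: "A k powr p \<le> K powr p * B k powr p" if "k \<in> Zset" for k
  proof -
    have "A k powr p \<le> (K * B k) powr p" using A0[OF that] AB[OF that] p by (intro powr_mono2) auto
    also have "\<dots> = K powr p * B k powr p"
      using K0 A0[OF that] AB[OF that] by (cases "K = 0") (auto simp: powr_mult zero_le_mult_iff)
    finally show ?thesis .
  qed
  have s2: "(\<lambda>k. K powr p * B k powr p) summable_on Zset" using Bs by (rule summable_on_cmult_right)
  have s1: "(\<lambda>k. A k powr p) summable_on Zset"
    by (rule summable_on_comparison_test[OF s2]) (use pt in auto)
  have "(\<Sum>\<^sub>\<infinity>k\<in>Zset. A k powr p) \<le> (\<Sum>\<^sub>\<infinity>k\<in>Zset. K powr p * B k powr p)"
    by (rule infsum_mono[OF s1 s2 pt])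
  also have "\<dots> = K powr p * (\<Sum>\<^sub>\<infinity>k\<in>Zset. B k powr p)" by (rule infsum_cmult_right')
  also have "\<dots> \<le> K powr p * R powr p" using Bb by (intro mult_left_mono) auto
  also have "\<dots> = (K * R) powr p" using K0 R0 by (simp add: powr_mult)
  finally have "(\<Sum>\<^sub>\<infinity>k\<in>Zset. A k powr p) powr (1/p) \<le> ((K * R) powr p) powr (1/p)"
    using p by (intro powr_mono2) (auto intro: infsum_nonneg)
  also have "\<dots> = K * R" using K0 R0 p by (simp add: powr_powr)
  finally show ?thesis using s1 by simp
qed

theorem lemma2p7:
  fixes s p t :: real and n :: nat and v v' :: "int \<Rightarrow> complex"
  assumes sp: "(s > - 1 / p \<and> p > 1) \<or> (s \<ge> -1 \<and> p = 1)"
    and n: "n \<ge> 2"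
    and v: "in_FL0 s p v" and v': "in_FL0 s p v'"
  shows "in_FL0 s p (NN n t v) \<and>
         FL_norm s p (NN n t v) \<le>
           Cs s n * Zsp s p ^ (n - 1) / (2 ^ (n - 1) * fact (n - 1)) * FL_norm s p v ^ n \<and>
         FL_norm s p (\<lambda>k. NN n t v k - NN n t v' k) \<le>
           Cs s n * (real n * Zsp s p ^ (n - 1)) / (2 ^ (n - 1) * fact (n - 1)) *
           (FL_norm s p v + FL_norm s p v') ^ (n - 1) * FL_norm s p (\<lambda>k. v k - v' k)"
proof -
  have p1: "p \<ge> 1" using sp by auto
  have s1: "s \<ge> -1"
  proof (cases "p = 1")
    case False
    then have "p > 1" "s > -1/p" using sp by auto
    moreover have "-1/p \<ge> -1" using \<open>p > 1\<close> by (simp add: field_simps)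
    ultimately show ?thesis by linarith
  qed (use sp in auto)
  have n1: "n \<ge> 1" using n by simp
  define Zc where "Zc = Zsp s p"
  have Zc0: "Zc \<ge> 0"
  proof (cases "p = 1")
    case True then show ?thesis using Zsp_one[OF s1] by (simp add: Zc_def)
  next
    case False then show ?thesis by (simp add: Zc_def Zsp_def Let_def)
  qed
  define bw where "bw w x = \<bar>real_of_int x\<bar> powr s * cmod (w x)" for w :: "int \<Rightarrow> complex" and x
  define nrm where "nrm w = (\<Sum>\<^sub>\<infinity>x\<in>Zset. bw w x powr p) powr (1/p)" for w
  have FLn: "FL_norm s p w = nrm w" for w by (simp add: FL_norm_def nrm_def bw_def)
  have nrm0: "nrm w \<ge> 0" for w by (simp add: nrm_def)
  define good where "good f \<longleftrightarrow> (\<forall>x. f x \<ge> 0) \<and> (\<lambda>x. f x powr p) summable_on Zset \<and>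
     (\<lambda>x. \<bar>real_of_int x\<bar> powr (-(s+1)) * f x) summable_on Zset \<and>
     (\<Sum>\<^sub>\<infinity>x\<in>Zset. \<bar>real_of_int x\<bar> powr (-(s+1)) * f x) \<le> Zc * (\<Sum>\<^sub>\<infinity>x\<in>Zset. f x powr p) powr (1/p)"
    for f :: "int \<Rightarrow> real"
  have goodI: "good (bw w)" if "(\<lambda>x. bw w x powr p) summable_on Zset" for w
  proof -
    have "\<forall>x. bw w x \<ge> 0" by (simp add: bw_def)
    then show ?thesis using holder_Z[OF sp, of "bw w"] that unfolding good_def Zc_def by auto
  qed
  have gv: "good (bw v)" using v by (intro goodI) (simp add: in_FL0_def bw_def)
  have gv': "good (bw v')" using v' by (intro goodI) (simp add: in_FL0_def bw_def)
  define d where "d k = v k - v' k" for k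
  have gd: "good (bw d)"
  proof (rule goodI)
    have sv: "(\<lambda>x. bw v x powr p) summable_on Zset" "(\<lambda>x. bw v' x powr p) summable_on Zset"
      using gv gv' by (auto simp: good_def)
    have "(\<lambda>x. 2 powr p * (bw v x powr p + bw v' x powr p)) summable_on Zset"
      by (intro summable_on_cmult_right summable_on_add sv)
    moreover have "bw d x powr p \<le> 2 powr p * (bw v x powr p + bw v' x powr p)" for x
    proof -
      have "bw d x \<le> bw v x + bw v' x"
        unfolding bw_def d_def by (simp add: distrib_left[symmetric] mult_left_mono norm_triangle_ineq4)
      then have "bw d x powr p \<le> (bw v x + bw v' x) powr p" using p1 by (intro powr_mono2) (auto simp: bw_def)
      also have "\<dots> \<le> 2 powr p * (bw v x powr p + bw v' x powr p)"
        using p1 by (intro powr_sum_le) (auto simp: bw_def)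
      finally show ?thesis .
    qed
    ultimately show "(\<lambda>x. bw d x powr p) summable_on Zset"
      by (rule summable_on_comparison_test) auto
  qed
  have conv: "\<bar>real_of_int x\<bar> powr (-(s+1)) * bw w x = cmod (w x) / \<bar>real_of_int x\<bar>" if "x \<noteq> 0" for x w
  proof -
    have "\<bar>real_of_int x\<bar> powr (-(s+1)) * \<bar>real_of_int x\<bar> powr s = \<bar>real_of_int x\<bar> powr (-1)"
      using that by (simp add: powr_add[symmetric])
    also have "\<dots> = 1 / \<bar>real_of_int x\<bar>" using that by (simp add: powr_minus divide_inverse)
    finally show ?thesis by (simp add: bw_def mult.assoc[symmetric])
  qed
  have PkZ: "g j \<in> Zset" if "g \<in> Pk n k" "j < n" for g k j
    using that by (auto simp: Pk_def Pn_def PiE_def Pi_def)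
  define K where "K = 1 / (2 ^ (n - 1) * fact n :: real)"
  have K0: "K \<ge> 0" by (simp add: K_def)
  have kpow: "\<bar>real_of_int k\<bar> powr s * (\<bar>real_of_int k\<bar> / (2 ^ (n - 1) * fact n) * X) = K * (\<bar>real_of_int k\<bar> powr (s+1) * X)"
    if "k \<in> Zset" for k X
  proof -
    have "\<bar>real_of_int k\<bar> powr s * \<bar>real_of_int k\<bar> = \<bar>real_of_int k\<bar> powr (s+1)"
      using that by (simp add: Zset_def powr_add)
    then show ?thesis unfolding K_def by (simp add: field_simps)
  qed
  have G: "(\<lambda>g. \<Prod>j<n. \<bar>real_of_int (g j)\<bar> powr (-(s+1)) * bw v (g j)) summable_on Pk n k"
    "(\<lambda>k. (\<bar>real_of_int k\<bar> powr (s+1) * (\<Sum>\<^sub>\<infinity>g\<in>Pk n k. \<Prod>j<n. \<bar>real_of_int (g j)\<bar> powr (-(s+1)) * bw v (g j))) powr p) summable_on Zset"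
    "(\<Sum>\<^sub>\<infinity>k\<in>Zset. (\<bar>real_of_int k\<bar> powr (s+1) * (\<Sum>\<^sub>\<infinity>g\<in>Pk n k. \<Prod>j<n. \<bar>real_of_int (g j)\<bar> powr (-(s+1)) * bw v (g j))) powr p)
         \<le> (Cs s n * (real n * Zc ^ (n - 1) * (\<Prod>j<n. (\<Sum>\<^sub>\<infinity>x\<in>Zset. bw v x powr p) powr (1/p)))) powr p" for k
    using GEN[OF p1 s1 n1 Zc0, where e="\<lambda>j. bw v"] gv unfolding good_def by auto
  have prodconv: "(\<Prod>j<n. \<bar>real_of_int (g j)\<bar> powr (-(s+1)) * bw w (g j)) = (\<Prod>j<n. cmod (w (g j)) / \<bar>real_of_int (g j)\<bar>)"
    if "g \<in> Pk n k" for g k w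
    by (intro prod.cong refl conv) (use PkZ[OF that] in \<open>auto simp: Zset_def\<close>)
  have smv: "(\<lambda>g. \<Prod>j<n. cmod (v (g j)) / \<bar>real_of_int (g j)\<bar>) summable_on Pk n k" for k
    using G(1)[of k] by (rule summable_on_cong[THEN iffD1, rotated]) (metis prodconv)
  have part1: "(\<lambda>k. (\<bar>real_of_int k\<bar> powr s * cmod (NN n t v k)) powr p) summable_on Zset \<and>
      (\<Sum>\<^sub>\<infinity>k\<in>Zset. (\<bar>real_of_int k\<bar> powr s * cmod (NN n t v k)) powr p) powr (1/p)
      \<le> K * (Cs s n * (real n * Zc ^ (n - 1) * (\<Prod>j<n. (\<Sum>\<^sub>\<infinity>x\<in>Zset. bw v x powr p) powr (1/p))))"
  proof (rule fl_finish[OF p1 _ _ G(2) G(3) _ K0])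
    fix k :: int assume k: "k \<in> Zset"
    show "0 \<le> \<bar>real_of_int k\<bar> powr s * cmod (NN n t v k)" by simp
    have "\<bar>real_of_int k\<bar> powr s * cmod (NN n t v k) \<le> \<bar>real_of_int k\<bar> powr s *
        (\<bar>real_of_int k\<bar> / (2 ^ (n - 1) * fact n) * (\<Sum>\<^sub>\<infinity>g\<in>Pk n k. \<Prod>j<n. cmod (v (g j)) / \<bar>real_of_int (g j)\<bar>))"
      using NN_pt(3)[OF _ smv[of k], of t] k by (intro mult_left_mono) (auto simp: Zset_def)
    also have "\<dots> = K * (\<bar>real_of_int k\<bar> powr (s+1) * (\<Sum>\<^sub>\<infinity>g\<in>Pk n k. \<Prod>j<n. cmod (v (g j)) / \<bar>real_of_int (g j)\<bar>))"
      by (rule kpow[OF k])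
    also have "(\<Sum>\<^sub>\<infinity>g\<in>Pk n k. \<Prod>j<n. cmod (v (g j)) / \<bar>real_of_int (g j)\<bar>) =
        (\<Sum>\<^sub>\<infinity>g\<in>Pk n k. \<Prod>j<n. \<bar>real_of_int (g j)\<bar> powr (-(s+1)) * bw v (g j))"
      by (rule infsum_cong) (metis prodconv)
    finally show "\<bar>real_of_int k\<bar> powr s * cmod (NN n t v k) \<le> K * (\<bar>real_of_int k\<bar> powr (s+1) * (\<Sum>\<^sub>\<infinity>g\<in>Pk n k. \<Prod>j<n. \<bar>real_of_int (g j)\<bar> powr (-(s+1)) * bw v (g j)))" .
  qed (use Zc0 Cs_nonneg in \<open>auto intro!: mult_nonneg_nonneg prod_nonneg\<close>)
  have fact_eq: "fact n = real n * fact (n - 1)" using n1 by (metis fact_reduce of_nat_0_less_iff less_le_trans zero_less_one)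
  have P1: "in_FL0 s p (NN n t v)"
    using part1 by (simp add: in_FL0_def NN_def)
  have P2: "FL_norm s p (NN n t v) \<le> Cs s n * Zsp s p ^ (n - 1) / (2 ^ (n - 1) * fact (n - 1)) * FL_norm s p v ^ n"
  proof -
    have "FL_norm s p (NN n t v) \<le> K * (Cs s n * (real n * Zc ^ (n - 1) * nrm v ^ n))"
      using part1 by (simp add: FL_norm_def nrm_def)
    also have "\<dots> = Cs s n * Zsp s p ^ (n - 1) / (2 ^ (n - 1) * fact (n - 1)) * FL_norm s p v ^ n"
      using n1 by (simp add: K_def Zc_def FLn fact_eq field_simps)
    finally show ?thesis .
  qed
  define em where "em m j = (if j < m then bw v' else if j = m then bw d else bw v)" for m j :: nat
  have gem: "good (em m j)" for m j using gv gv' gd by (simp add: em_def)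
  define Sm where "Sm m k = (\<Sum>\<^sub>\<infinity>g\<in>Pk n k. \<Prod>j<n. \<bar>real_of_int (g j)\<bar> powr (-(s+1)) * em m j (g j))" for m k
  define Nm where "Nm m = Cs s n * (real n * Zc ^ (n - 1) * (\<Prod>j<n. (\<Sum>\<^sub>\<infinity>x\<in>Zset. em m j x powr p) powr (1/p)))" for m
  have GM: "(\<lambda>g. \<Prod>j<n. \<bar>real_of_int (g j)\<bar> powr (-(s+1)) * em m j (g j)) summable_on Pk n k"
    "(\<lambda>k. (\<bar>real_of_int k\<bar> powr (s+1) * Sm m k) powr p) summable_on Zset"
    "(\<Sum>\<^sub>\<infinity>k\<in>Zset. (\<bar>real_of_int k\<bar> powr (s+1) * Sm m k) powr p) \<le> Nm m powr p" for m k
    using GEN[OF p1 s1 n1 Zc0, where e="em m"] gem[of m] unfolding good_def Sm_def Nm_def by auto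
  define F where "F m g = (\<Prod>j<n. (if j < m then cmod (v' (g j)) / \<bar>real_of_int (g j)\<bar>
                else if j = m then cmod (v (g j) - v' (g j)) / \<bar>real_of_int (g j)\<bar>
                else cmod (v (g j)) / \<bar>real_of_int (g j)\<bar>))" for m g
  have Fconv: "F m g = (\<Prod>j<n. \<bar>real_of_int (g j)\<bar> powr (-(s+1)) * em m j (g j))" if "g \<in> Pk n k" for m g k
    unfolding F_def em_def
    by (intro prod.cong refl) (use PkZ[OF that] conv in \<open>auto simp: Zset_def d_def\<close>)
  have Fs: "F m summable_on Pk n k" for m k
    using GM(1)[of m k] by (rule summable_on_cong[THEN iffD1, rotated]) (metis Fconv)
  have smv': "(\<lambda>g. \<Prod>j<n. cmod (v' (g j)) / \<bar>real_of_int (g j)\<bar>) summable_on Pk n k" for k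
  proof -
    have G': "(\<lambda>g. \<Prod>j<n. \<bar>real_of_int (g j)\<bar> powr (-(s+1)) * bw v' (g j)) summable_on Pk n k"
      using GEN(1)[OF p1 s1 n1 Zc0, where e="\<lambda>j. bw v'"] gv' unfolding good_def by auto
    then show ?thesis by (rule summable_on_cong[THEN iffD1, rotated]) (metis prodconv)
  qed
  have FsumS: "(\<lambda>g. \<Sum>m<n. F m g) summable_on Pk n k \<and> (\<Sum>\<^sub>\<infinity>g\<in>Pk n k. \<Sum>m<n. F m g) = (\<Sum>m<n. Sm m k)" for k
  proof -
    have "(\<lambda>g. \<Sum>m\<in>{..<n}. F m g) summable_on Pk n k \<and> infsum (\<lambda>g. \<Sum>m\<in>{..<n}. F m g) (Pk n k) = (\<Sum>m\<in>{..<n}. infsum (F m) (Pk n k))"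
      by (rule infsum_sum_fin) (auto intro: Fs)
    moreover have "infsum (F m) (Pk n k) = Sm m k" for m
      unfolding Sm_def by (rule infsum_cong) (metis Fconv)
    ultimately show ?thesis by simp
  qed
  have T0: "\<bar>real_of_int k\<bar> powr (s+1) * Sm m k \<ge> 0" for m k
    unfolding Sm_def using gem unfolding good_def
    by (intro mult_nonneg_nonneg infsum_nonneg prod_nonneg) auto
  have Mk: "(\<lambda>k. (\<Sum>m\<in>{..<n}. \<bar>real_of_int k\<bar> powr (s+1) * Sm m k) powr p) summable_on Zset \<and>
         (\<Sum>\<^sub>\<infinity>k\<in>Zset. (\<Sum>m\<in>{..<n}. \<bar>real_of_int k\<bar> powr (s+1) * Sm m k) powr p) \<le> (\<Sum>m\<in>{..<n}. Nm m) powr p"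
    by (rule minkowski_fin[OF p1]) (use T0 GM(2,3) Zc0 Cs_nonneg in \<open>auto simp: Nm_def intro!: mult_nonneg_nonneg prod_nonneg\<close>)
  have part2: "(\<lambda>k. (\<bar>real_of_int k\<bar> powr s * cmod (NN n t v k - NN n t v' k)) powr p) summable_on Zset \<and>
      (\<Sum>\<^sub>\<infinity>k\<in>Zset. (\<bar>real_of_int k\<bar> powr s * cmod (NN n t v k - NN n t v' k)) powr p) powr (1/p)
      \<le> K * (\<Sum>m\<in>{..<n}. Nm m)"
  proof (rule fl_finish[OF p1 _ _ conjunct1[OF Mk] conjunct2[OF Mk] _ K0])
    fix k :: int assume k: "k \<in> Zset"
    show "0 \<le> \<bar>real_of_int k\<bar> powr s * cmod (NN n t v k - NN n t v' k)" by simp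
    have "\<bar>real_of_int k\<bar> powr s * cmod (NN n t v k - NN n t v' k) \<le> \<bar>real_of_int k\<bar> powr s *
        (\<bar>real_of_int k\<bar> / (2 ^ (n - 1) * fact n) * (\<Sum>\<^sub>\<infinity>g\<in>Pk n k. \<Sum>m<n. F m g))"
      using NN_diff_pt[OF _ smv[of k] smv'[of k], of t] conjunct1[OF FsumS[of k]] k
      by (intro mult_left_mono) (auto simp: Zset_def F_def)
    also have "\<dots> = K * (\<bar>real_of_int k\<bar> powr (s+1) * (\<Sum>\<^sub>\<infinity>g\<in>Pk n k. \<Sum>m<n. F m g))"
      by (rule kpow[OF k])
    also have "\<dots> = K * (\<Sum>m\<in>{..<n}. \<bar>real_of_int k\<bar> powr (s+1) * Sm m k)"
      using FsumS[of k] by (simp add: sum_distrib_left)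
    finally show "\<bar>real_of_int k\<bar> powr s * cmod (NN n t v k - NN n t v' k) \<le> K * (\<Sum>m\<in>{..<n}. \<bar>real_of_int k\<bar> powr (s+1) * Sm m k)" .
  next
    show "0 \<le> (\<Sum>m\<in>{..<n}. Nm m)"
      using Zc0 Cs_nonneg by (auto simp: Nm_def intro!: sum_nonneg mult_nonneg_nonneg prod_nonneg)
  qed
  define M where "M = nrm v + nrm v'"
  have Nmb: "Nm m \<le> Cs s n * (real n * Zc ^ (n - 1) * (M ^ (n - 1) * nrm d))" if m: "m < n" for m
  proof -
    have em_n: "(\<Sum>\<^sub>\<infinity>x\<in>Zset. em m j x powr p) powr (1/p) = (if j < m then nrm v' else if j = m then nrm d else nrm v)" for j
      by (simp add: em_def nrm_def)
    have e1: "(\<Prod>j<n. (\<Sum>\<^sub>\<infinity>x\<in>Zset. em m j x powr p) powr (1/p)) = nrm d * (\<Prod>j\<in>{..<n}-{m}. (if j < m then nrm v' else if j = m then nrm d else nrm v))"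
      using m by (simp add: em_n prod.remove)
    have e2: "(\<Prod>j\<in>{..<n}-{m}. (if j < m then nrm v' else if j = m then nrm d else nrm v)) \<le> (\<Prod>j\<in>{..<n}-{m}. M)"
      by (intro prod_mono) (auto simp: M_def nrm0 add_increasing add_increasing2)
    have e3: "(\<Prod>j\<in>{..<n}-{m}. M) = M ^ (n - 1)" using m by simp
    have "(\<Prod>j<n. (\<Sum>\<^sub>\<infinity>x\<in>Zset. em m j x powr p) powr (1/p)) \<le> M ^ (n - 1) * nrm d"
      unfolding e1 using mult_left_mono[OF e2 nrm0[of d]] e3 by (simp add: mult.commute)
    then show ?thesis unfolding Nm_def using Zc0 Cs_nonneg by (intro mult_left_mono) auto
  qed
  have P3: "FL_norm s p (\<lambda>k. NN n t v k - NN n t v' k) \<le>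
           Cs s n * (real n * Zsp s p ^ (n - 1)) / (2 ^ (n - 1) * fact (n - 1)) *
           (FL_norm s p v + FL_norm s p v') ^ (n - 1) * FL_norm s p (\<lambda>k. v k - v' k)"
  proof -
    have "FL_norm s p (\<lambda>k. NN n t v k - NN n t v' k) \<le> K * (\<Sum>m\<in>{..<n}. Nm m)"
      using part2 by (simp add: FL_norm_def)
    also have "\<dots> \<le> K * (\<Sum>m\<in>{..<n}. Cs s n * (real n * Zc ^ (n - 1) * (M ^ (n - 1) * nrm d)))"
      using Nmb K0 by (intro mult_left_mono sum_mono) auto
    also have "\<dots> = Cs s n * (real n * Zsp s p ^ (n - 1)) / (2 ^ (n - 1) * fact (n - 1)) *
           (FL_norm s p v + FL_norm s p v') ^ (n - 1) * FL_norm s p (\<lambda>k. v k - v' k)"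
      using n1 by (simp add: K_def Zc_def FLn M_def d_def[abs_def] fact_eq field_simps)
    finally show ?thesis .
  qed
  show ?thesis using P1 P2 P3 by blast
qed

end
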